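(* In $V_{1/2}^+$, every field $W^n(z)$ ($n$ odd) is a normally ordered polynomial in the fields $\partial^iW^1(z)$, $i\ge0$. Consequently $V_{1/2}^+$ is isomorphic to the simple Virasoro vertex algebra $L(\tfrac12,0)$ of central charge $\frac12$ (generated by $W^1(z)$).
   Context: $V_c^+$ is the vacuum vertex algebra of $\widehat{\mathcal D}^+$ with central charge $c$: $\widehat{\mathcal D}^+=\mathcal D^+\oplus\mathbb CC$ with $\mathcal D^+=\{a:\sigma(a)=-a\}$ inside the Lie algebra of differential operators $t^kf(D)$ on the circle ($D=t\frac d{dt}$), $\sigma(t)=t$, $\sigma(D)=-D-1$, central extension by the cocycle $\Psi(t^rf(D),t^{-r}g(D))=\sum_{-r\le j\le-1}f(j)g(j+r)$ ($r\ge0$); $V_c^+$ is the irreducible highest weight module with highest weight zero on $\mathcal D^+_0$ and $C=c$, with fields $W^n(z)=\sum_kW^n_kz^{-k-n-1}$, $W^n_k=-\frac12t^k([D]_n-[-D-k-1]_n)$, $n$ odd. The modes $W^1_k$ satisfy $[W^1_m,W^1_n]=(m-n)W^1_{m+n}+\delta_{m,-n}\frac{m^3-m}{12}C$. $L(c,h)$ denotes the irreducible highest weight Virasoro module; $L(\frac12,0)$ carries the simple Virasoro vertex algebra structure. *)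

theory Defs
  imports "HOL-Analysis.Analysis" "HOL-Computational_Algebra.Polynomial"
begin

text \<open>Elements of the Lie algebra of differential operators on the circle:
  a finite sum  sum_k t^k f_k(D)  is encoded as the function k \<mapsto> f_k
  (a complex polynomial), with finite support.\<close>

type_synonym dop = "int \<Rightarrow> complex poly"

definition dsupp :: "dop \<Rightarrow> int set" where
  "dsupp a = {k. a k \<noteq> 0}"

definition pshift :: "complex poly \<Rightarrow> int \<Rightarrow> complex poly" where
  "pshift f s = pcompose f [:of_int s, 1:]"

text \<open>Bracket: [t^r f(D), t^s g(D)] = t^(r+s) (f(D+s) g(D) - g(D+r) f(D)),
  extended bilinearly.\<close>
definition dbracket :: "dop \<Rightarrow> dop \<Rightarrow> dop" where
  "dbracket a b = (\<lambda>k. \<Sum>r\<in>dsupp a.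
      pshift (a r) (k - r) * b (k - r) - pshift (b (k - r)) r * a r)"

text \<open>Anti-involution sigma with sigma(t)=t, sigma(D) = -D-1:
  sigma(t^k f(D)) = f(-D-1) t^k = t^k f(-D-k-1).\<close>
definition dsigma :: "dop \<Rightarrow> dop" where
  "dsigma a = (\<lambda>k. pcompose (a k) [:- of_int k - 1, -1:])"

definition Dplus :: "dop set" where
  "Dplus = {a. finite (dsupp a) \<and> dsigma a = (\<lambda>k. - a k)}"

definition psi1 :: "int \<Rightarrow> complex poly \<Rightarrow> complex poly \<Rightarrow> complex" where
  "psi1 r f g = (if 0 \<le> r
      then (\<Sum>j\<in>{-r..-1}. poly f (of_int j) * poly g (of_int (j + r)))
      else - (\<Sum>j\<in>{r..-1}. poly g (of_int j) * poly f (of_int (j - r))))"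

definition Psi :: "dop \<Rightarrow> dop \<Rightarrow> complex" where
  "Psi a b = (\<Sum>r\<in>dsupp a. psi1 r (a r) (b (- r)))"

definition dscale :: "complex \<Rightarrow> dop \<Rightarrow> dop" where
  "dscale z a = (\<lambda>k. smult z (a k))"

definition ffact_poly :: "nat \<Rightarrow> complex poly" where
  "ffact_poly n = (\<Prod>i<n. [:- of_nat i, 1:])"

definition Wmode :: "nat \<Rightarrow> int \<Rightarrow> dop" where
  "Wmode n k = (\<lambda>j. if j = k
      then smult (- 1/2) (ffact_poly n - pcompose (ffact_poly n) [:- of_int k - 1, -1:])
      else 0)"

text \<open>A representation of the central extension of D^+ on the complex vector space
  (UNIV, +, sc), with the central element C acting as the scalar c.\<close>
definition Dplus_rep ::
  "(complex \<Rightarrow> 'v::ab_group_add \<Rightarrow> 'v) \<Rightarrow> complex \<Rightarrow> (dop \<Rightarrow> 'v \<Rightarrow> 'v) \<Rightarrow> bool" where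
  "Dplus_rep sc c \<rho> \<longleftrightarrow>
     vector_space sc \<and>
     (\<forall>a\<in>Dplus. Vector_Spaces.linear sc sc (\<rho> a)) \<and>
     (\<forall>a\<in>Dplus. \<forall>b\<in>Dplus. \<forall>z w v.
        \<rho> (\<lambda>k. dscale z a k + dscale w b k) v = sc z (\<rho> a v) + sc w (\<rho> b v)) \<and>
     (\<forall>a\<in>Dplus. \<forall>b\<in>Dplus. \<forall>v.
        \<rho> a (\<rho> b v) - \<rho> b (\<rho> a v) = \<rho> (dbracket a b) v + sc (c * Psi a b) v)"

text \<open>(V, rho, v0) is an irreducible highest weight module of hat D^+ with highest weight
  zero on D^+_0 and central charge c, i.e. a model of V_c^+ with vacuum v0.\<close>
definition is_Vplus ::
  "(complex \<Rightarrow> 'v::ab_group_add \<Rightarrow> 'v) \<Rightarrow> complex \<Rightarrow> (dop \<Rightarrow> 'v \<Rightarrow> 'v) \<Rightarrow> 'v \<Rightarrow> bool" where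
  "is_Vplus sc c \<rho> v0 \<longleftrightarrow>
     Dplus_rep sc c \<rho> \<and> v0 \<noteq> 0 \<and>
     (\<forall>a\<in>Dplus. (\<forall>j\<le>0. a j = 0) \<longrightarrow> \<rho> a v0 = 0) \<and>
     (\<forall>a\<in>Dplus. (\<forall>j. j \<noteq> 0 \<longrightarrow> a j = 0) \<longrightarrow> \<rho> a v0 = 0) \<and>
     (\<forall>S. module.subspace sc S \<and> (\<forall>a\<in>Dplus. \<forall>v\<in>S. \<rho> a v \<in> S)
          \<longrightarrow> S = {0} \<or> S = UNIV)"

text \<open>The modes L : int => (V => V) make (V, sc) an irreducible highest weight
  Virasoro module with central charge c and highest weight h, highest weight vector v0,
  i.e. a model of L(c,h).\<close>
definition is_L_vir ::
  "(complex \<Rightarrow> 'v::ab_group_add \<Rightarrow> 'v) \<Rightarrow> (int \<Rightarrow> 'v \<Rightarrow> 'v) \<Rightarrow> complex \<Rightarrow> complex \<Rightarrow> 'v \<Rightarrow> bool" where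
  "is_L_vir sc L c h v0 \<longleftrightarrow>
     vector_space sc \<and>
     (\<forall>k. Vector_Spaces.linear sc sc (L k)) \<and>
     (\<forall>m n v. L m (L n v) - L n (L m v) =
        sc (of_int (m - n)) (L (m + n) v)
        + (if m = - n then sc (of_int (m^3 - m) / 12 * c) v else 0)) \<and>
     v0 \<noteq> 0 \<and> (\<forall>k>0. L k v0 = 0) \<and> L 0 v0 = sc h v0 \<and>
     (\<forall>S. module.subspace sc S \<and> (\<forall>k. \<forall>v\<in>S. L k v \<in> S) \<longrightarrow> S = {0} \<or> S = UNIV)"

end

theory Submission
  imports Defs "HOL-Library.Function_Algebras"
begin


definition hm :: "int \<Rightarrow> complex poly \<Rightarrow> dop" where
  "hm k f = (\<lambda>j. if j = k then f else 0)"

definition hd :: "int \<Rightarrow> complex poly \<Rightarrow> bool" where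
  "hd k f \<longleftrightarrow> (\<forall>x. poly f (- x - of_int k - 1) = - poly f x)"

definition bp :: "int \<Rightarrow> complex poly \<Rightarrow> int \<Rightarrow> complex poly \<Rightarrow> complex poly" where
  "bp j f k g = pshift f k * g - pshift g j * f"

definition cen :: "int \<Rightarrow> complex poly" where
  "cen k = [: (of_int k + 1) / 2, 1 :]"

definition psih :: "int \<Rightarrow> complex poly \<Rightarrow> int \<Rightarrow> complex poly \<Rightarrow> complex" where
  "psih j f k g = (if j + k = 0 then psi1 j f g else 0)"

definition theta :: "dop \<Rightarrow> dop" where
  "theta a = (\<lambda>k. pshift (a (- k)) k)"

lemma poly_pshift[simp]: "poly (pshift f s) x = poly f (x + of_int s)"
  by (simp add: pshift_def poly_pcompose algebra_simps)

lemma poly_cen[simp]: "poly (cen k) x = x + (of_int k + 1) / 2"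
  by (simp add: cen_def algebra_simps)

lemma poly_eqI: "(\<And>x. poly p x = poly q x) \<Longrightarrow> (p::complex poly) = q"
  by (simp add: poly_eq_poly_eq_iff[symmetric] fun_eq_iff)

lemma pshift_0[simp]: "pshift 0 s = 0"
  by (simp add: pshift_def)

lemma pshift_pshift: "pshift (pshift f s) t = pshift f (s + t)"
  by (rule poly_eqI) (simp add: algebra_simps)

lemma pshift_zero_shift[simp]: "pshift f 0 = f"
  by (rule poly_eqI) simp

lemma pshift_eq_0_iff[simp]: "pshift f s = 0 \<longleftrightarrow> f = 0"
proof
  assume "pshift f s = 0"
  then have "pshift (pshift f s) (-s) = 0" by simp
  then show "f = 0" by (simp add: pshift_pshift)
qed simp

lemma hdE: "hd k f \<Longrightarrow> y = - x - of_int k - 1 \<Longrightarrow> poly f y = - poly f x"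
  unfolding hd_def by auto

lemma hdI: "(\<And>x. poly f (- x - of_int k - 1) = - poly f x) \<Longrightarrow> hd k f"
  unfolding hd_def by auto

lemma hd_comb: "hd k f \<Longrightarrow> hd k g \<Longrightarrow> hd k (smult z f + smult w g)"
  unfolding hd_def by (simp add: algebra_simps)

lemma hd_zero[simp]: "hd k 0"
  unfolding hd_def by simp

lemma hd_neg: "hd k f \<Longrightarrow> hd k (- f)"
  unfolding hd_def by simp

lemma hd_smult: "hd k f \<Longrightarrow> hd k (smult z f)"
  unfolding hd_def by simp

lemma hd_add: "hd k f \<Longrightarrow> hd k g \<Longrightarrow> hd k (f + g)"
  unfolding hd_def by simp

lemma hd_diff: "hd k f \<Longrightarrow> hd k g \<Longrightarrow> hd k (f - g)"
  unfolding hd_def by simp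

lemma hd_cen: "hd k (cen k)"
  unfolding hd_def by (simp add: field_simps)

lemma hd_cen3: "hd k (cen k ^ 3)"
  unfolding hd_def by (simp add: field_simps power3_eq_cube)

lemma hd_bp: assumes f: "hd j f" and g: "hd k g" shows "hd (j + k) (bp j f k g)"
proof (rule hdI)
  fix x :: complex
  have 1: "poly f (- x - of_int (j + k) - 1 + of_int k) = - poly f x"
    by (rule hdE[OF f]) simp
  have 2: "poly g (- x - of_int (j + k) - 1) = - poly g (x + of_int j)"
    by (rule hdE[OF g]) simp
  have 3: "poly g (- x - of_int (j + k) - 1 + of_int j) = - poly g x"
    by (rule hdE[OF g]) simp
  have 4: "poly f (- x - of_int (j + k) - 1) = - poly f (x + of_int k)"
    by (rule hdE[OF f]) simp
  show "poly (bp j f k g) (- x - of_int (j + k) - 1) = - poly (bp j f k g) x"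
    unfolding bp_def poly_diff poly_mult poly_pshift 1 2 3 4 by simp
qed

lemma bp_anti: "bp j f k g = - bp k g j f"
  unfolding bp_def by simp

lemma bp_31: "bp j (cen j ^ 3) k (cen k) =
   smult (of_int (3*k - j)) (cen (j+k) ^ 3) + smult (of_int (k^3 - 3*j*k^2) / 4) (cen (j+k))"
  by (rule poly_eqI) (simp add: bp_def field_simps power3_eq_cube power2_eq_square)

lemma bp_11: "bp j (cen j) k (cen k) = smult (of_int (k - j)) (cen (j+k))"
  by (rule poly_eqI) (simp add: bp_def field_simps)

lemma bp_E0: "bp 0 (cen 0) k f = smult (of_int k) f"
  by (rule poly_eqI) (simp add: bp_def field_simps)

lemma bp_00: "bp 0 f 0 g = 0"
  by (simp add: bp_def)

lemma bp_zero1[simp]: "bp j 0 k g = 0" and bp_zero2[simp]: "bp j f k 0 = 0"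
  by (simp_all add: bp_def)

lemma hm_0[simp]: "hm k 0 = (\<lambda>_. 0)"
  by (auto simp: hm_def)

lemma dsupp_hm: "dsupp (hm k f) = (if f = 0 then {} else {k})"
  by (auto simp: dsupp_def hm_def)

lemma Dplus_iff: "a \<in> Dplus \<longleftrightarrow> finite (dsupp a) \<and> (\<forall>k. hd k (a k))"
proof -
  have "dsigma a = (\<lambda>k. - a k) \<longleftrightarrow> (\<forall>k. hd k (a k))"
  proof
    assume h: "dsigma a = (\<lambda>k. - a k)"
    show "\<forall>k. hd k (a k)"
    proof
      fix k
      have "pcompose (a k) [:- of_int k - 1, -1:] = - a k"
        using fun_cong[OF h, of k] by (simp add: dsigma_def)
      then have "\<And>x. poly (pcompose (a k) [:- of_int k - 1, -1:]) x = - poly (a k) x"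
        by simp
      then show "hd k (a k)"
        by (intro hdI) (simp add: poly_pcompose algebra_simps)
    qed
  next
    assume h: "\<forall>k. hd k (a k)"
    show "dsigma a = (\<lambda>k. - a k)"
    proof
      fix k
      show "dsigma a k = - a k"
        unfolding dsigma_def
      proof (rule poly_eqI)
        fix x
        have "poly (a k) (- x - of_int k - 1) = - poly (a k) x" using h by (simp add: hd_def)
        then show "poly (pcompose (a k) [:- of_int k - 1, -1:]) x = poly (- a k) x"
          by (simp add: poly_pcompose algebra_simps)
      qed
    qed
  qed
  then show ?thesis by (simp add: Dplus_def)
qed

lemma hm_Dplus[simp]: "hm k f \<in> Dplus \<longleftrightarrow> hd k f"
  by (simp add: Dplus_iff dsupp_hm) (auto simp: hm_def)

lemma Dplus_hd: "a \<in> Dplus \<Longrightarrow> hd k (a k)"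
  unfolding Dplus_iff by auto

lemma dbracket_hm: "dbracket (hm j f) (hm k g) = hm (j + k) (bp j f k g)"
proof
  fix m
  show "dbracket (hm j f) (hm k g) m = hm (j + k) (bp j f k g) m"
  proof (cases "f = 0")
    case True then show ?thesis by (simp add: dbracket_def dsupp_hm hm_def)
  next
    case False
    then have "dbracket (hm j f) (hm k g) m = pshift f (m - j) * hm k g (m - j) - pshift (hm k g (m - j)) j * f"
      by (simp add: dbracket_def dsupp_hm) (simp add: hm_def)
    then show ?thesis
      by (auto simp: hm_def bp_def)
  qed
qed

lemma psi1_zero1[simp]: "psi1 r 0 g = 0" and psi1_zero2[simp]: "psi1 r f 0 = 0"
  by (simp_all add: psi1_def)

lemma Psi_hm: "Psi (hm j f) (hm k g) = psih j f k g"
proof (cases "f = 0")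
  case True then show ?thesis by (simp add: Psi_def dsupp_hm psih_def)
next
  case False
  then have "Psi (hm j f) (hm k g) = psi1 j f (hm k g (- j))"
    by (simp add: Psi_def dsupp_hm) (simp add: hm_def)
  then show ?thesis
    by (auto simp: psih_def hm_def)
qed

lemma hm_comb: "(\<lambda>j. dscale z (hm k f) j + dscale w (hm k g) j) = hm k (smult z f + smult w g)"
  by (auto simp: dscale_def hm_def)

lemma psih_E0[simp]: "psih 0 f k g = 0"
  by (simp add: psih_def psi1_def)

lemma theta_hm: "theta (hm j f) = hm (- j) (pshift f (- j))"
  by (auto simp: theta_def hm_def)

lemma theta_theta[simp]: "theta (theta a) = a"
  by (auto simp: theta_def pshift_pshift)

lemma hd_theta: "hd j f \<Longrightarrow> hd (- j) (pshift f (- j))"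
proof (rule hdI)
  fix x assume "hd j f"
  show "poly (pshift f (- j)) (- x - of_int (- j) - 1) = - poly (pshift f (- j)) x"
    by (simp, rule hdE[OF \<open>hd j f\<close>]) simp
qed

lemma Dplus_theta: "a \<in> Dplus \<Longrightarrow> theta a \<in> Dplus"
proof -
  assume a: "a \<in> Dplus"
  have "dsupp (theta a) = uminus ` dsupp a"
    by (force simp: dsupp_def theta_def image_iff)
  then have "finite (dsupp (theta a))" using a by (simp add: Dplus_iff)
  moreover have "hd k (theta a k)" for k
    using hd_theta[OF Dplus_hd[OF a, of "- k"]] by (simp add: theta_def)
  ultimately show ?thesis by (simp add: Dplus_iff)
qed

lemma theta_comb: "theta (\<lambda>k. dscale z a k + dscale w b k) = (\<lambda>k. dscale z (theta a) k + dscale w (theta b) k)"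
  by (auto simp: theta_def dscale_def intro!: poly_eqI)

lemma bp_theta: "bp (- k) (pshift g (- k)) (- j) (pshift f (- j)) = pshift (bp j f k g) (- (j + k))"
  by (rule poly_eqI) (simp add: bp_def algebra_simps)

lemma psih_theta: "psih (- k) (pshift g (- k)) (- j) (pshift f (- j)) = psih j f k g"
proof (cases "j + k = 0")
  case True
  then have k: "k = - j" by simp
  show ?thesis
  proof (cases "0 \<le> j")
    case True
    then show ?thesis unfolding psih_def psi1_def k by (simp add: mult.commute)
  next
    case False
    then show ?thesis unfolding psih_def psi1_def k by (simp add: mult.commute)
  qed
next
  case False then show ?thesis by (simp add: psih_def)
qed

lemma theta_E0: "theta (hm 0 (cen 0)) = hm 0 (cen 0)"
  by (simp add: theta_hm)

lemma theta_L: "theta (hm k (- cen k)) = hm (- k) (- cen (- k))"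
proof -
  have "pshift (- cen k) (- k) = - cen (- k)"
    by (rule poly_eqI) (simp add: field_simps)
  then show ?thesis by (simp add: theta_hm)
qed

lemma Wmode1: "Wmode 1 k = hm k (- cen k)"
proof -
  have "ffact_poly 1 = [:0, 1:]" by (simp add: ffact_poly_def)
  then show ?thesis
    unfolding Wmode_def hm_def
    by (intro ext) (auto intro!: poly_eqI simp: poly_pcompose field_simps)
qed

definition E1 :: "int \<Rightarrow> dop" where "E1 k = hm k (cen k)"
definition E3 :: "int \<Rightarrow> dop" where "E3 k = hm k (cen k ^ 3)"
definition Lm :: "int \<Rightarrow> dop" where "Lm k = hm k (- cen k)"

lemma hd_negcen: "hd k (- cen k)"
  by (rule hd_neg[OF hd_cen])

lemma bp_13: "bp (-1) (cen (-1)) k (cen k ^ 3) =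
   smult (of_int (k + 3)) (cen (k - 1) ^ 3) + smult ((1 + 3 * of_int k) / 4) (cen (k - 1))"
  by (rule poly_eqI) (simp add: bp_def field_simps power3_eq_cube power2_eq_square)

lemma bp_neg4: "bp j f k (- g) = - bp j f k g"
  by (rule poly_eqI) (simp add: bp_def)

definition qk :: "int \<Rightarrow> complex poly" where
  "qk k = [: of_int k ^ 3 + 3/2 * of_int k ^ 2 + 3/4 * of_int k, 3 * of_int k ^ 2 + 3 * of_int k, 3 * of_int k :]"

lemma bp_q: "bp 0 (cen 0 ^ 3) k h = qk k * h"
  by (rule poly_eqI) (simp add: bp_def qk_def field_simps power3_eq_cube power2_eq_square)

lemma degree_qk: "k \<noteq> 0 \<Longrightarrow> degree (qk k) = 2"
  by (simp add: qk_def)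

lemma qk_nz: "k \<noteq> 0 \<Longrightarrow> qk k \<noteq> 0"
  using degree_qk by fastforce

lemma poly_qk_even: "poly (qk k) (- x - of_int k - 1) = poly (qk k) x"
  by (simp add: qk_def field_simps power3_eq_cube power2_eq_square)

definition refl :: "int \<Rightarrow> complex poly \<Rightarrow> complex poly" where
  "refl k p = pcompose p [:- of_int k - 1, -1:]"

lemma poly_refl[simp]: "poly (refl k p) x = poly p (- x - of_int k - 1)"
  by (simp add: refl_def poly_pcompose algebra_simps)

lemma hd_refl: "hd k p \<longleftrightarrow> refl k p = - p"
proof
  assume "hd k p" then show "refl k p = - p" by (intro poly_eqI) (simp add: hd_def)
next
  assume h: "refl k p = - p"
  show "hd k p"
  proof (rule hdI)
    fix x
    have "poly (refl k p) x = poly (- p) x" using h by simp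
    then show "poly p (- x - of_int k - 1) = - poly p x" by simp
  qed
qed

lemma refl_mult: "refl k (p * q) = refl k p * refl k q"
  by (intro poly_eqI) simp

lemma refl_add: "refl k (p + q) = refl k p + refl k q"
  by (intro poly_eqI) simp

lemma degree_refl: "degree (refl k p) = degree p"
  by (simp add: refl_def degree_pcompose)

lemma refl_qk: "refl k (qk k) = qk k"
  by (intro poly_eqI) (simp add: poly_qk_even)

lemma deg1_poly: "degree r \<le> 1 \<Longrightarrow> r = [: coeff r 0, coeff r 1 :]"
  by (auto simp: poly_eq_iff coeff_pCons coeff_eq_0 split: nat.split)

lemma odd_deg1: assumes h: "hd k r" and d: "degree r \<le> 1"
  shows "r = smult (coeff r 1) (cen k)"
proof -
  have r: "r = [: coeff r 0, coeff r 1 :]" by (rule deg1_poly[OF d])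
  have "poly r (- 0 - of_int k - 1) = - poly r 0" by (rule hdE[OF h]) simp
  then have "2 * coeff r 0 = coeff r 1 * (of_int k + 1)"
    by (subst (asm) (1 2) r) (simp add: algebra_simps)
  then have c0: "coeff r 0 = coeff r 1 * (of_int k + 1) / 2"
    by (simp add: field_simps)
  show ?thesis
    by (subst r, rule poly_eqI) (simp add: c0 field_simps)
qed

lemma div_step:
  assumes k: "k \<noteq> 0" and f: "hd k f"
  shows "\<exists>h r. f = qk k * h + r \<and> hd k h \<and> hd k r \<and> degree r \<le> 1 \<and> (h = 0 \<or> degree h < degree f)"
proof -
  define q where "q = qk k"
  define h where "h = f div q"
  define r where "r = f mod q"
  have qnz: "q \<noteq> 0" using qk_nz[OF k] by (simp add: q_def)
  have dq: "degree q = 2" using degree_qk[OF k] by (simp add: q_def)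
  have fe: "f = q * h + r" by (simp add: h_def r_def)
  have dr: "degree r \<le> 1"
  proof (cases "r = 0")
    case False then show ?thesis using degree_mod_less[OF qnz, of f] dq by (simp add: r_def)
  qed simp
  have "refl k f = - f" using f by (simp add: hd_refl)
  then have "q * refl k h + refl k r = - (q * h + r)"
    using fe by (metis refl_add refl_mult refl_qk q_def)
  then have eq: "q * (h + refl k h) = - (r + refl k r)"
    by (simp add: algebra_simps)
  have h0: "h + refl k h = 0"
  proof (rule ccontr)
    assume ne: "h + refl k h \<noteq> 0"
    have "degree (q * (h + refl k h)) = 2 + degree (h + refl k h)"
      using degree_mult_eq[OF qnz ne] dq by simp
    moreover have "degree (- (r + refl k r)) \<le> 1"
    proof -
      have "degree (r + refl k r) \<le> 1" using degree_add_le[of r 1 "refl k r"] dr degree_refl[of k r] by simp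
      then show ?thesis by (simp only: degree_minus)
    qed
    ultimately show False using eq by simp
  qed
  have "q * (h + refl k h) = 0" using h0 by simp
  then have "- (r + refl k r) = 0" using eq by metis
  then have r0: "r + refl k r = 0" by (metis neg_equal_0_iff_equal)
  have hh: "hd k h" using h0 by (simp add: hd_refl eq_neg_iff_add_eq_0 add.commute)
  have hr: "hd k r" using r0 by (simp add: hd_refl eq_neg_iff_add_eq_0 add.commute)
  have "h = 0 \<or> degree h < degree f"
  proof (cases "h = 0")
    case False
    have dqh: "degree (q * h) = 2 + degree h" using degree_mult_eq[OF qnz False] dq by simp
    have "degree f = degree (q * h)"
      unfolding fe using dr dqh by (intro degree_add_eq_left) simp
    then show ?thesis using dqh by simp
  qed simp
  then show ?thesis using fe hh hr dr q_def by blast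
qed


locale hrep = vector_space sc for sc :: "complex \<Rightarrow> 'w::ab_group_add \<Rightarrow> 'w" +
  fixes \<rho> :: "dop \<Rightarrow> 'w \<Rightarrow> 'w" and K :: "'w set"
  assumes K0: "0 \<in> K" and Kadd: "x \<in> K \<Longrightarrow> y \<in> K \<Longrightarrow> x + y \<in> K"
    and Ksc: "x \<in> K \<Longrightarrow> sc z x \<in> K"
    and rK: "a \<in> Dplus \<Longrightarrow> x \<in> K \<Longrightarrow> \<rho> a x \<in> K"
    and radd: "a \<in> Dplus \<Longrightarrow> \<rho> a (x + y) = \<rho> a x + \<rho> a y"
    and rsc: "a \<in> Dplus \<Longrightarrow> \<rho> a (sc z x) = sc z (\<rho> a x)"
    and lina: "a \<in> Dplus \<Longrightarrow> b \<in> Dplus \<Longrightarrow> x \<in> K \<Longrightarrow>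
       \<rho> (\<lambda>k. dscale z a k + dscale w b k) x = sc z (\<rho> a x) + sc w (\<rho> b x)"
    and comm: "hd j f \<Longrightarrow> hd k g \<Longrightarrow> x \<in> K \<Longrightarrow>
       \<rho> (hm j f) (\<rho> (hm k g) x) = \<rho> (hm k g) (\<rho> (hm j f) x) + \<rho> (hm (j + k) (bp j f k g)) x
         + sc (1/2 * psih j f k g) x"
begin

lemma Kneg: "x \<in> K \<Longrightarrow> - x \<in> K"
  using Ksc[of x "-1"] by simp

lemma Kdiff: "x \<in> K \<Longrightarrow> y \<in> K \<Longrightarrow> x - y \<in> K"
  using Kadd[OF _ Kneg] by simp

lemma r0: "a \<in> Dplus \<Longrightarrow> \<rho> a 0 = 0"
  using rsc[of a 0 0] by simp

lemma rneg: "a \<in> Dplus \<Longrightarrow> \<rho> a (- x) = - \<rho> a x"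
  using rsc[of a "-1" x] by simp

lemma rdiff: "a \<in> Dplus \<Longrightarrow> \<rho> a (x - y) = \<rho> a x - \<rho> a y"
  using radd[of a x "- y"] rneg[of a y] by simp

lemma rlin: "hd k f \<Longrightarrow> hd k g \<Longrightarrow> x \<in> K \<Longrightarrow>
   \<rho> (hm k (smult z f + smult w g)) x = sc z (\<rho> (hm k f) x) + sc w (\<rho> (hm k g) x)"
  using lina[of "hm k f" "hm k g" x z w] by (simp add: hm_comb)

lemma rzero: "x \<in> K \<Longrightarrow> \<rho> (hm k 0) x = 0"
  using rlin[of k 0 0 x 0 0] by simp

lemma rzero': "x \<in> K \<Longrightarrow> \<rho> (\<lambda>_. 0) x = 0"
  using rzero[of x 0] by simp

lemma rsmult: "hd k f \<Longrightarrow> x \<in> K \<Longrightarrow> \<rho> (hm k (smult z f)) x = sc z (\<rho> (hm k f) x)"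
  using rlin[of k f 0 x z 0] by simp

lemma rplus: "hd k f \<Longrightarrow> hd k g \<Longrightarrow> x \<in> K \<Longrightarrow> \<rho> (hm k (f + g)) x = \<rho> (hm k f) x + \<rho> (hm k g) x"
  using rlin[of k f g x 1 1] by simp

lemma rminusp: "hd k f \<Longrightarrow> x \<in> K \<Longrightarrow> \<rho> (hm k (- f)) x = - \<rho> (hm k f) x"
  using rsmult[of k f x "-1"] by simp

lemma rdiffp: "hd k f \<Longrightarrow> hd k g \<Longrightarrow> x \<in> K \<Longrightarrow> \<rho> (hm k (f - g)) x = \<rho> (hm k f) x - \<rho> (hm k g) x"
  using rlin[of k f g x 1 "-1"] by simp

lemma eigen: assumes x: "x \<in> K" and ex: "\<rho> (hm 0 (cen 0)) x = sc \<mu> x" and f: "hd k f"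
  shows "\<rho> (hm 0 (cen 0)) (\<rho> (hm k f) x) = sc (\<mu> + of_int k) (\<rho> (hm k f) x)"
proof -
  have "\<rho> (hm 0 (cen 0)) (\<rho> (hm k f) x) = \<rho> (hm k f) (\<rho> (hm 0 (cen 0)) x) + \<rho> (hm (0 + k) (bp 0 (cen 0) k f)) x
         + sc (1/2 * psih 0 (cen 0) k f) x"
    by (rule comm[OF hd_cen f x])
  also have "\<dots> = sc \<mu> (\<rho> (hm k f) x) + sc (of_int k) (\<rho> (hm k f) x)"
    using ex f x by (simp add: bp_E0 rsc rsmult)
  finally show ?thesis by (simp add: scale_left_distrib)
qed

lemma decomp:
  assumes a: "a \<in> Dplus" and x: "x \<in> K" and S0: "0 \<in> S" and Sadd: "\<And>y z. y \<in> S \<Longrightarrow> z \<in> S \<Longrightarrow> y + z \<in> S"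
    and hS: "\<And>k. \<rho> (hm k (a k)) x \<in> S"
  shows "\<rho> a x \<in> S"
proof -
  have "\<forall>a. a \<in> Dplus \<longrightarrow> dsupp a \<subseteq> F \<longrightarrow> (\<forall>k. \<rho> (hm k (a k)) x \<in> S) \<longrightarrow> \<rho> a x \<in> S"
    if "finite F" for F
    using that
  proof (induction F rule: finite_induct)
    case empty
    show ?case
    proof (intro allI impI)
      fix a assume "a \<in> Dplus" "dsupp a \<subseteq> {}"
      then have "a = (\<lambda>_. 0)" by (auto simp: dsupp_def)
      then show "\<rho> a x \<in> S" using rzero'[OF x] S0 by simp
    qed
  next
    case (insert k F)
    show ?case
    proof (intro allI impI)
      fix a assume aD: "a \<in> Dplus" and sF: "dsupp a \<subseteq> insert k F" and hS': "\<forall>k. \<rho> (hm k (a k)) x \<in> S"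
      define a' where "a' = a(k := 0)"
      have fa: "finite (dsupp a)" using aD by (simp add: Dplus_iff)
      have "dsupp a' \<subseteq> dsupp a" by (auto simp: a'_def dsupp_def)
      then have "finite (dsupp a')" using fa finite_subset by blast
      moreover have "hd j (a' j)" for j using Dplus_hd[OF aD, of j] by (simp add: a'_def)
      ultimately have a'D: "a' \<in> Dplus" by (simp add: Dplus_iff)
      have "dsupp a' \<subseteq> F" using sF by (auto simp: a'_def dsupp_def)
      moreover have "\<forall>j. \<rho> (hm j (a' j)) x \<in> S"
        using hS' rzero[OF x, of k] S0 by (auto simp: a'_def)
      ultimately have IH: "\<rho> a' x \<in> S" using insert.IH a'D by blast
      have hk: "hm k (a k) \<in> Dplus" using Dplus_hd[OF aD] by simp
      have "a = (\<lambda>j. dscale 1 a' j + dscale 1 (hm k (a k)) j)"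
        by (auto simp: a'_def dscale_def hm_def)
      then have "\<rho> a x = sc 1 (\<rho> a' x) + sc 1 (\<rho> (hm k (a k)) x)"
        using lina[OF a'D hk x, of 1 1] by simp
      then show "\<rho> a x \<in> S" using IH hS' Sadd by simp
    qed
  qed
  then show ?thesis using a hS by (auto simp: Dplus_iff)
qed

end

locale hwm = hrep +
  fixes v
  assumes vK: "v \<in> K"
    and hw: "0 \<le> k \<Longrightarrow> hd k f \<Longrightarrow> \<rho> (hm k f) v = 0"
    and sing: "u \<in> K \<Longrightarrow> 0 < N \<Longrightarrow> \<rho> (hm 0 (cen 0)) u = sc (- of_nat N) u \<Longrightarrow>
       (\<forall>p g. 0 < p \<longrightarrow> hd p g \<longrightarrow> \<rho> (hm p g) u = 0) \<Longrightarrow> u = 0"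
begin

lemma v_eig: "\<rho> (hm 0 (cen 0)) v = sc 0 v"
  using hw[OF _ hd_cen, of 0] by simp

lemma L1: "0 \<le> p \<Longrightarrow> hd p g \<Longrightarrow> hd k f \<Longrightarrow>
   \<rho> (hm p g) (\<rho> (hm k f) v) = \<rho> (hm (p + k) (bp p g k f)) v + sc (1/2 * psih p g k f) v"
  using comm[of p g k f v] vK hw[of p g] r0[of "hm k f"] by simp

lemma ann: "hd (- int N) f \<Longrightarrow> (\<forall>j::int. 0 \<le> j \<longrightarrow> j < int N \<longrightarrow> poly f (of_int j) = 0) \<Longrightarrow>
    \<rho> (hm (- int N) f) v = 0"
proof (induction N arbitrary: f rule: less_induct)
  case (less N)
  show ?case
  proof (cases "N = 0")
    case True then show ?thesis using hw less.prems by simp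
  next
    case False
    let ?u = "\<rho> (hm (- int N) f) v"
    have uK: "?u \<in> K" using rK vK less.prems by simp
    have eig: "\<rho> (hm 0 (cen 0)) ?u = sc (- of_nat N) ?u"
      using eigen[OF vK v_eig less.prems(1)] by simp
    have kill: "\<forall>p g. 0 < p \<longrightarrow> hd p g \<longrightarrow> \<rho> (hm p g) ?u = 0"
    proof (intro allI impI)
      fix p g assume p: "0 < p" and g: "hd p g"
      have e: "\<rho> (hm p g) ?u = \<rho> (hm (p + - int N) (bp p g (- int N) f)) v
          + sc (1/2 * psih p g (- int N) f) v"
        by (rule L1) (use p g less.prems in auto)
      have z1: "\<rho> (hm (p + - int N) (bp p g (- int N) f)) v = 0"
      proof (cases "int N \<le> p")
        case True then show ?thesis using hw hd_bp[OF g less.prems(1)] by simp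
      next
        case False
        define M where "M = nat (int N - p)"
        have M: "M < N" "p + - int N = - int M" using p False by (auto simp: M_def)
        have hdb: "hd (- int M) (bp p g (- int N) f)" using hd_bp[OF g less.prems(1)] M by simp
        have "\<forall>j::int. 0 \<le> j \<longrightarrow> j < int M \<longrightarrow> poly (bp p g (- int N) f) (of_int j) = 0"
        proof (intro allI impI)
          fix j :: int assume j: "0 \<le> j" "j < int M"
          have "poly f (of_int j) = 0" using less.prems(2) j M by auto
          moreover have "poly f (of_int (j + p)) = 0"
            by (rule less.prems(2)[rule_format]) (use j M p in \<open>auto simp: M_def\<close>)
          ultimately show "poly (bp p g (- int N) f) (of_int j) = 0"
            by (simp add: bp_def add.commute)
        qed
        then show ?thesis using less.IH[OF M(1) hdb] M(2) by simp
      qed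
      have z2: "psih p g (- int N) f = 0"
      proof (cases "p = int N")
        case True
        have z: "\<forall>i \<in> {- p..-1}. poly g (of_int i) * poly f (of_int (i + p)) = 0"
        proof
          fix i assume i: "i \<in> {- p..-1}"
          have "poly f (of_int (i + int N)) = 0"
            by (rule less.prems(2)[rule_format]) (use i True in auto)
          then show "poly g (of_int i) * poly f (of_int (i + p)) = 0" using True by simp
        qed
        have "psi1 p g f = (\<Sum>i\<in>{- p..-1}. poly g (of_int i) * poly f (of_int (i + p)))"
          using p by (simp add: psi1_def)
        also have "\<dots> = 0" using z by (intro sum.neutral) blast
        finally have "psi1 p g f = 0" .
        then show ?thesis using True by (simp add: psih_def)
      next
        case False then show ?thesis by (simp add: psih_def)
      qed
      show "\<rho> (hm p g) ?u = 0" using e z1 z2 by simp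
    qed
    show ?thesis using sing[OF uK _ eig kill] False by simp
  qed
qed

lemma sm1: "hd (-1) f \<Longrightarrow> \<rho> (hm (-1) f) v = 0"
proof -
  assume h: "hd (-1) f"
  have "poly f 0 = - poly f 0" by (rule hdE[OF h]) simp
  then have f0: "poly f 0 = 0" by simp
  have "\<forall>j::int. 0 \<le> j \<longrightarrow> j < int 1 \<longrightarrow> poly f (of_int j) = 0"
  proof (intro allI impI)
    fix j :: int assume "0 \<le> j" "j < int 1"
    then have "j = 0" by simp
    then show "poly f (of_int j) = 0" using f0 by simp
  qed
  then show ?thesis using ann[of 1 f] h by simp
qed

lemma sm2: assumes h: "hd (-2) f" shows "\<rho> (hm (-2) f) v = sc (2 * poly f 1) (\<rho> (hm (-2) (cen (-2))) v)"
proof -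
  define f' where "f' = f - smult (2 * poly f 1) (cen (-2))"
  have h': "hd (-2) f'" unfolding f'_def by (intro hd_diff h hd_smult hd_cen)
  have e: "poly f 1 = - poly f 0" by (rule hdE[OF h]) simp
  have "\<forall>j::int. 0 \<le> j \<longrightarrow> j < int 2 \<longrightarrow> poly f' (of_int j) = 0"
  proof (intro allI impI)
    fix j :: int assume "0 \<le> j" "j < int 2"
    then have "j = 0 \<or> j = 1" by auto
    then show "poly f' (of_int j) = 0" using e by (auto simp: f'_def)
  qed
  then have z: "\<rho> (hm (-2) f') v = 0" using ann[of 2 f'] h' by simp
  have "\<rho> (hm (-2) f) v = \<rho> (hm (-2) (f' + smult (2 * poly f 1) (cen (-2)))) v" by (simp add: f'_def)
  also have "\<dots> = \<rho> (hm (-2) f') v + sc (2 * poly f 1) (\<rho> (hm (-2) (cen (-2))) v)"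
    using rplus[OF h' hd_smult[OF hd_cen] vK] rsmult[OF hd_cen vK] by simp
  finally have "\<rho> (hm (-2) f) v = \<rho> (hm (-2) f') v + sc (2 * poly f 1) (\<rho> (hm (-2) (cen (-2))) v)" .
  then show ?thesis using z by simp
qed

lemma sm3: assumes h: "hd (-3) f" shows "\<rho> (hm (-3) f) v = sc (poly f 2) (\<rho> (hm (-3) (cen (-3))) v)"
proof -
  define f' where "f' = f - smult (poly f 2) (cen (-3))"
  have h': "hd (-3) f'" unfolding f'_def by (intro hd_diff h hd_smult hd_cen)
  have e: "poly f 2 = - poly f 0" by (rule hdE[OF h]) simp
  have e1: "poly f 1 = - poly f 1" by (rule hdE[OF h]) simp
  have "\<forall>j::int. 0 \<le> j \<longrightarrow> j < int 3 \<longrightarrow> poly f' (of_int j) = 0"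
  proof (intro allI impI)
    fix j :: int assume "0 \<le> j" "j < int 3"
    then have "j = 0 \<or> j = 1 \<or> j = 2" by auto
    then show "poly f' (of_int j) = 0" using e e1 by (auto simp: f'_def)
  qed
  then have z: "\<rho> (hm (-3) f') v = 0" using ann[of 3 f'] h' by simp
  have "\<rho> (hm (-3) f) v = \<rho> (hm (-3) (f' + smult (poly f 2) (cen (-3)))) v" by (simp add: f'_def)
  also have "\<dots> = \<rho> (hm (-3) f') v + sc (poly f 2) (\<rho> (hm (-3) (cen (-3))) v)"
    using rplus[OF h' hd_smult[OF hd_cen] vK] rsmult[OF hd_cen vK] by simp
  finally have "\<rho> (hm (-3) f) v = \<rho> (hm (-3) f') v + sc (poly f 2) (\<rho> (hm (-3) (cen (-3))) v)" .
  then show ?thesis using z by simp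
qed

lemma TX: assumes p: "0 < p" and g: "hd p g"
  shows "\<rho> (hm p g) (\<rho> (hm (-2) (cen (-2))) (\<rho> (hm (-2) (cen (-2))) v)) =
     sc (psih p g (-2) (cen (-2))) (\<rho> (hm (-2) (cen (-2))) v)
     + \<rho> (hm (p - 4) (bp (p - 2) (bp p g (-2) (cen (-2))) (-2) (cen (-2)))) v
     + sc (1/2 * psih (p - 2) (bp p g (-2) (cen (-2))) (-2) (cen (-2))) v"
proof -
  define b2 where "b2 = bp p g (-2) (cen (-2))"
  define e2 where "e2 = hm (-2) (cen (-2))"
  have hb2: "hd (p - 2) b2" unfolding b2_def using hd_bp[OF g hd_cen[of "-2"]] by simp
  have e2D: "e2 \<in> Dplus" by (simp add: e2_def hd_cen)
  have xK: "\<rho> e2 v \<in> K" using rK[OF e2D vK] .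
  have s1: "\<rho> (hm p g) (\<rho> e2 (\<rho> e2 v)) = \<rho> e2 (\<rho> (hm p g) (\<rho> e2 v)) + \<rho> (hm (p - 2) b2) (\<rho> e2 v)
      + sc (1/2 * psih p g (-2) (cen (-2))) (\<rho> e2 v)"
    using comm[OF g hd_cen xK[unfolded e2_def]] by (simp add: e2_def b2_def)
  have s2: "\<rho> (hm p g) (\<rho> e2 v) = \<rho> (hm (p - 2) b2) v + sc (1/2 * psih p g (-2) (cen (-2))) v"
    using L1[OF _ g hd_cen, of "-2"] p by (simp add: e2_def b2_def)
  have s3: "\<rho> (hm (p - 2) b2) v = 0"
  proof (cases "2 \<le> p")
    case True then show ?thesis using hw[OF _ hb2] by simp
  next
    case False then have "p = 1" using p by simp
    then show ?thesis using sm1 hb2 by simp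
  qed
  have s4: "\<rho> (hm (p - 2) b2) (\<rho> e2 v) = \<rho> e2 (\<rho> (hm (p - 2) b2) v)
      + \<rho> (hm (p - 4) (bp (p - 2) b2 (-2) (cen (-2)))) v + sc (1/2 * psih (p - 2) b2 (-2) (cen (-2))) v"
    using comm[OF hb2 hd_cen vK, of "-2"] by (simp add: e2_def)
  have s5: "\<rho> e2 (\<rho> (hm p g) (\<rho> e2 v)) = sc (1/2 * psih p g (-2) (cen (-2))) (\<rho> e2 v)"
    using s2 s3 rsc[OF e2D] by simp
  show ?thesis
    unfolding s1[unfolded e2_def] s5[unfolded e2_def] s4[unfolded e2_def] s3 r0[OF e2D[unfolded e2_def]]
    by (simp add: b2_def e2_def scale_left_distrib[symmetric] algebra_simps)
qed

lemma int_4: "{-4..-1::int} = {-4,-3,-2,-1}" by auto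
lemma int_2: "{-2..-1::int} = {-2,-1}" by auto

lemma W4: "\<rho> (hm (-4) (cen (-4) ^ 3)) v =
   sc (-6/7) (\<rho> (hm (-2) (cen (-2))) (\<rho> (hm (-2) (cen (-2))) v)) + sc (43/28) (\<rho> (hm (-4) (cen (-4))) v)"
proof -
  define a :: complex where "a = -6/7"
  define b :: complex where "b = 43/28"
  define e2 where "e2 = hm (-2) (cen (-2))"
  define X where "X = \<rho> e2 (\<rho> e2 v)"
  define Y where "Y = \<rho> (hm (-4) (cen (-4))) v"
  define Z where "Z = \<rho> (hm (-4) (cen (-4) ^ 3)) v"
  define u where "u = Z - sc a X - sc b Y"
  have e2D: "e2 \<in> Dplus" by (simp add: e2_def hd_cen)
  have E0D: "hm 0 (cen 0) \<in> Dplus" by (simp add: hd_cen)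
  have XK: "X \<in> K" unfolding X_def using rK[OF e2D] vK by simp
  have YK: "Y \<in> K" unfolding Y_def using rK vK hd_cen by simp
  have ZK: "Z \<in> K" unfolding Z_def using rK vK hd_cen3 by simp
  have uK: "u \<in> K" unfolding u_def using XK YK ZK by (intro Kdiff Ksc)
  have eZ: "\<rho> (hm 0 (cen 0)) Z = sc (-4) Z"
    using eigen[OF vK v_eig hd_cen3[of "-4"]] by (simp add: Z_def)
  have eY: "\<rho> (hm 0 (cen 0)) Y = sc (-4) Y"
    using eigen[OF vK v_eig hd_cen[of "-4"]] by (simp add: Y_def)
  have e2v: "\<rho> (hm 0 (cen 0)) (\<rho> e2 v) = sc (-2) (\<rho> e2 v)"
    using eigen[OF vK v_eig hd_cen[of "-2"]] by (simp add: e2_def)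
  have eX: "\<rho> (hm 0 (cen 0)) X = sc (-4) X"
    using eigen[OF rK[OF e2D vK] e2v hd_cen[of "-2"]] by (simp add: X_def e2_def)
  have eu: "\<rho> (hm 0 (cen 0)) u = sc (- of_nat 4) u"
    unfolding u_def using eX eY eZ by (simp add: rdiff[OF E0D] rsc[OF E0D] radd[OF E0D] algebra_simps)
  have kill: "\<forall>p g. 0 < p \<longrightarrow> hd p g \<longrightarrow> \<rho> (hm p g) u = 0"
  proof (intro allI impI)
    fix p g assume p: "0 < p" and g: "hd p g"
    have GD: "hm p g \<in> Dplus" using g by simp
    define b2 where "b2 = bp p g (-2) (cen (-2))"
    define B1 where "B1 = bp p g (-4) (cen (-4) ^ 3)"
    define B3 where "B3 = bp (p - 2) b2 (-2) (cen (-2))"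
    define B1' where "B1' = bp p g (-4) (cen (-4))"
    define Bt where "Bt = B1 - smult a B3 - smult b B1'"
    have hb2: "hd (p - 2) b2" unfolding b2_def using hd_bp[OF g hd_cen[of "-2"]] by simp
    have hB1: "hd (p - 4) B1" unfolding B1_def using hd_bp[OF g hd_cen3[of "-4"]] by simp
    have hB1': "hd (p - 4) B1'" unfolding B1'_def using hd_bp[OF g hd_cen[of "-4"]] by simp
    have hB3: "hd (p - 4) B3" unfolding B3_def using hd_bp[OF hb2 hd_cen[of "-2"]] by simp
    have hBt: "hd (p - 4) Bt" unfolding Bt_def using hB1 hB3 hB1' by (intro hd_diff hd_smult)
    have gZ: "\<rho> (hm p g) Z = \<rho> (hm (p - 4) B1) v + sc (1/2 * psih p g (-4) (cen (-4) ^ 3)) v"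
      using L1[OF _ g hd_cen3[of "-4"]] p by (simp add: Z_def B1_def)
    have gY: "\<rho> (hm p g) Y = \<rho> (hm (p - 4) B1') v + sc (1/2 * psih p g (-4) (cen (-4))) v"
      using L1[OF _ g hd_cen[of "-4"]] p by (simp add: Y_def B1'_def)
    have gX: "\<rho> (hm p g) X = sc (psih p g (-2) (cen (-2))) (\<rho> e2 v) + \<rho> (hm (p - 4) B3) v
        + sc (1/2 * psih (p - 2) b2 (-2) (cen (-2))) v"
      using TX[OF p g] by (simp add: X_def e2_def B3_def b2_def)
    have eB: "\<rho> (hm (p - 4) Bt) v = \<rho> (hm (p - 4) B1) v - sc a (\<rho> (hm (p - 4) B3) v) - sc b (\<rho> (hm (p - 4) B1') v)"
      unfolding Bt_def using hB1 hB3 hB1' vK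
      by (simp add: rdiffp hd_diff hd_smult rsmult)
    have main: "\<rho> (hm p g) u = \<rho> (hm (p - 4) Bt) v - sc (a * psih p g (-2) (cen (-2))) (\<rho> e2 v)
        + sc (1/2 * psih p g (-4) (cen (-4) ^ 3) - a * (1/2 * psih (p - 2) b2 (-2) (cen (-2)))
              - b * (1/2 * psih p g (-4) (cen (-4)))) v"
      unfolding u_def eB using gZ gY gX
      by (simp add: rdiff[OF GD] rsc[OF GD] radd[OF GD] algebra_simps)
    consider "p = 1" | "p = 2" | "p = 3" | "p = 4" | "5 \<le> p" using p by linarith
    then show "\<rho> (hm p g) u = 0"
    proof cases
      case 1
      have g0: "poly g (-2) = - poly g 0" by (rule hdE[OF g]) (simp add: 1)
      have "poly Bt 2 = 0"
        unfolding Bt_def B1_def B3_def B1'_def b2_def 1 a_def b_def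
        using g0 by (simp add: bp_def field_simps power3_eq_cube)
      then have "\<rho> (hm (p - 4) Bt) v = 0" using sm3[of Bt] hBt 1 by simp
      then show ?thesis using main 1 by (simp add: psih_def)
    next
      case 2
      have g0: "poly g (-2) = - poly g (-1)" by (rule hdE[OF g]) (simp add: 2)
      have "2 * poly Bt 1 - a * psih p g (-2) (cen (-2)) = 0"
        unfolding Bt_def B1_def B3_def B1'_def b2_def 2 a_def b_def psih_def psi1_def
        using g0 by (simp add: bp_def int_2 field_simps power3_eq_cube)
      moreover have "\<rho> (hm (p - 4) Bt) v = sc (2 * poly Bt 1) (\<rho> e2 v)" using sm2[of Bt] hBt 2 by (simp add: e2_def)
      ultimately show ?thesis using main 2 by (simp add: psih_def algebra_simps scale_left_diff_distrib[symmetric])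
    next
      case 3
      have "\<rho> (hm (p - 4) Bt) v = 0" using sm1[of Bt] hBt 3 by simp
      then show ?thesis using main 3 by (simp add: psih_def)
    next
      case 4
      have "1/2 * psih p g (-4) (cen (-4) ^ 3) - a * (1/2 * psih (p - 2) b2 (-2) (cen (-2)))
              - b * (1/2 * psih p g (-4) (cen (-4))) = 0"
        unfolding b2_def 4 a_def b_def psih_def psi1_def
        by (simp add: bp_def int_2 int_4 field_simps power3_eq_cube)
      moreover have "\<rho> (hm (p - 4) Bt) v = 0" using hw[of 0 Bt] hBt 4 by simp
      ultimately show ?thesis using main 4 by (simp add: psih_def)
    next
      case 5
      have "\<rho> (hm (p - 4) Bt) v = 0" using hw[of "p - 4" Bt] hBt 5 by simp
      then show ?thesis using main 5 by (simp add: psih_def)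
    qed
  qed
  have "u = 0" by (rule sing[OF uK _ eu kill]) simp
  then show ?thesis unfolding u_def X_def Y_def Z_def e2_def a_def b_def by (simp add: algebra_simps)
qed

inductive_set VU where
  VU_v: "v \<in> VU"
| VU_L: "x \<in> VU \<Longrightarrow> \<rho> (Lm k) x \<in> VU"
| VU_add: "x \<in> VU \<Longrightarrow> y \<in> VU \<Longrightarrow> x + y \<in> VU"
| VU_sc: "x \<in> VU \<Longrightarrow> sc z x \<in> VU"

lemma VU_K: "x \<in> VU \<Longrightarrow> x \<in> K"
  by (induction rule: VU.induct) (auto simp: vK Lm_def hd_negcen intro: rK Kadd Ksc)

lemma VU_0: "0 \<in> VU"
  using VU_sc[OF VU_v, of 0] by simp

lemma VU_neg: "x \<in> VU \<Longrightarrow> - x \<in> VU"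
  using VU_sc[of x "-1"] by simp

lemma VU_diff: "x \<in> VU \<Longrightarrow> y \<in> VU \<Longrightarrow> x - y \<in> VU"
  using VU_add[OF _ VU_neg[of y], of x] by simp

lemma VU_E1: "x \<in> VU \<Longrightarrow> \<rho> (hm k (cen k)) x \<in> VU"
proof -
  assume x: "x \<in> VU"
  have "\<rho> (Lm k) x = - \<rho> (hm k (cen k)) x"
    unfolding Lm_def by (rule rminusp[OF hd_cen VU_K[OF x]])
  then have "\<rho> (hm k (cen k)) x = - \<rho> (Lm k) x" by simp
  then show ?thesis using VU_neg[OF VU_L[OF x]] by simp
qed

lemma E3_rec: assumes n: "4 \<le> n" and IH: "\<rho> (hm (- int n) (cen (- int n) ^ 3)) v \<in> VU"
  shows "\<rho> (hm (- int n - 1) (cen (- int n - 1) ^ 3)) v \<in> VU"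
proof -
  define k where "k = - int n"
  have "k + 3 \<noteq> 0" using n by (simp add: k_def)
  then have k3: "of_int (k + 3) \<noteq> (0::complex)" by (metis of_int_eq_0_iff)
  have hc: "hd (k - 1) (cen (k - 1) ^ 3)" "hd (k - 1) (cen (k - 1))" by (rule hd_cen3, rule hd_cen)
  have e: "\<rho> (hm (-1) (cen (-1))) (\<rho> (hm k (cen k ^ 3)) v) =
      \<rho> (hm k (cen k ^ 3)) (\<rho> (hm (-1) (cen (-1))) v) + \<rho> (hm (-1 + k) (bp (-1) (cen (-1)) k (cen k ^ 3))) v
      + sc (1/2 * psih (-1) (cen (-1)) k (cen k ^ 3)) v"
    by (rule comm[OF hd_cen hd_cen3 vK])
  have z1: "\<rho> (hm (-1) (cen (-1))) v = 0" by (rule sm1[OF hd_cen])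
  have z2: "psih (-1) (cen (-1)) k (cen k ^ 3) = 0" using n by (simp add: psih_def k_def)
  have z3: "\<rho> (hm k (cen k ^ 3)) 0 = 0" by (rule r0) (simp add: hd_cen3)
  have e2: "\<rho> (hm (k - 1) (bp (-1) (cen (-1)) k (cen k ^ 3))) v =
     sc (of_int (k + 3)) (\<rho> (hm (k - 1) (cen (k - 1) ^ 3)) v)
     + sc ((1 + 3 * of_int k) / 4) (\<rho> (hm (k - 1) (cen (k - 1))) v)"
    unfolding bp_13 by (rule rlin[OF hc vK])
  have "sc (of_int (k + 3)) (\<rho> (hm (k - 1) (cen (k - 1) ^ 3)) v) =
        \<rho> (hm (-1) (cen (-1))) (\<rho> (hm k (cen k ^ 3)) v) - sc ((1 + 3 * of_int k) / 4) (\<rho> (hm (k - 1) (cen (k - 1))) v)"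
    using e z1 z2 z3 e2 by (simp add: algebra_simps)
  moreover have "\<rho> (hm (-1) (cen (-1))) (\<rho> (hm k (cen k ^ 3)) v) \<in> VU"
    using VU_E1[OF IH[folded k_def]] .
  moreover have "\<rho> (hm (k - 1) (cen (k - 1))) v \<in> VU" using VU_E1[OF VU_v] .
  ultimately have "sc (of_int (k + 3)) (\<rho> (hm (k - 1) (cen (k - 1) ^ 3)) v) \<in> VU"
    by (metis VU_diff VU_sc)
  then have "sc (1 / of_int (k + 3)) (sc (of_int (k + 3)) (\<rho> (hm (k - 1) (cen (k - 1) ^ 3)) v)) \<in> VU"
    by (rule VU_sc)
  then show ?thesis using k3 by (simp add: k_def)
qed

lemma E3_v: "\<rho> (hm k (cen k ^ 3)) v \<in> VU"
proof -
  have A: "\<rho> (hm (- int n) (cen (- int n) ^ 3)) v \<in> VU" if "4 \<le> n" for n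
    using that
  proof (induction n rule: dec_induct)
    case base
    have "\<rho> (hm (-4) (cen (-4) ^ 3)) v \<in> VU"
      unfolding W4 by (intro VU_add VU_sc VU_E1 VU_v)
    then show ?case by simp
  next
    case (step n)
    have e: "- int (Suc n) = - int n - 1" by simp
    show ?case unfolding e by (rule E3_rec) (use step in auto)
  qed
  consider "0 \<le> k" | "k = -1" | "k = -2" | "k = -3" | "k \<le> -4" by linarith
  then show ?thesis
  proof cases
    case 1 then show ?thesis using hw[OF 1 hd_cen3] VU_0 by simp
  next
    case 2 then show ?thesis using sm1[OF hd_cen3] VU_0 by simp
  next
    case 3 then show ?thesis using sm2[OF hd_cen3[of "-2"]] by (simp add: VU_sc VU_E1 VU_v)
  next
    case 4 then show ?thesis using sm3[OF hd_cen3[of "-3"]] by (simp add: VU_sc VU_E1 VU_v)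
  next
    case 5
    then have "k = - int (nat (- k))" "4 \<le> nat (- k)" by auto
    then show ?thesis using A[of "nat (- k)"] by metis
  qed
qed

lemma E3_VU: "x \<in> VU \<Longrightarrow> \<rho> (hm k (cen k ^ 3)) x \<in> VU"
proof (induction x arbitrary: k rule: VU.induct)
  case VU_v then show ?case by (rule E3_v)
next
  case (VU_L x j)
  have xK: "x \<in> K" by (rule VU_K[OF VU_L.hyps(1)])
  have e: "\<rho> (hm k (cen k ^ 3)) (\<rho> (hm j (- cen j)) x) =
      \<rho> (hm j (- cen j)) (\<rho> (hm k (cen k ^ 3)) x) + \<rho> (hm (k + j) (bp k (cen k ^ 3) j (- cen j))) x
      + sc (1/2 * psih k (cen k ^ 3) j (- cen j)) x"
    by (rule comm[OF hd_cen3 hd_negcen xK])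
  have e2: "\<rho> (hm (k + j) (bp k (cen k ^ 3) j (- cen j))) x =
     sc (- of_int (3 * j - k)) (\<rho> (hm (k + j) (cen (k + j) ^ 3)) x)
     + sc (- (of_int (j ^ 3 - 3 * k * j ^ 2) / 4)) (\<rho> (hm (k + j) (cen (k + j))) x)"
  proof -
    have pe: "bp k (cen k ^ 3) j (- cen j) =
       smult (- of_int (3 * j - k)) (cen (k + j) ^ 3) + smult (- (of_int (j ^ 3 - 3 * k * j ^ 2) / 4)) (cen (k + j))"
      unfolding bp_neg4 bp_31 by (simp add: smult_diff_left)
    show ?thesis unfolding pe by (rule rlin[OF hd_cen3 hd_cen xK])
  qed
  have "\<rho> (hm j (- cen j)) (\<rho> (hm k (cen k ^ 3)) x) \<in> VU"
    using VU_L.IH[of k] VU.VU_L[of _ j] by (simp add: Lm_def)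
  moreover have "\<rho> (hm (k + j) (bp k (cen k ^ 3) j (- cen j))) x \<in> VU"
    unfolding e2 using VU_L.IH[of "k + j"] VU_E1[OF VU_L.hyps(1), of "k + j"] by (intro VU_add VU_sc)
  moreover have "sc (1/2 * psih k (cen k ^ 3) j (- cen j)) x \<in> VU"
    using VU_L.hyps(1) by (rule VU_sc)
  ultimately show ?case unfolding Lm_def e by (intro VU_add)
next
  case (VU_add x y)
  then show ?case using radd[of "hm k (cen k ^ 3)" x y] hd_cen3 by (simp add: VU.VU_add)
next
  case (VU_sc x z)
  then show ?case using rsc[of "hm k (cen k ^ 3)" z x] hd_cen3 by (simp add: VU.VU_sc)
qed

definition good :: "dop \<Rightarrow> bool" where
  "good a \<longleftrightarrow> a \<in> Dplus \<and> (\<forall>x\<in>VU. \<rho> a x \<in> VU)"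

lemma good_bp: assumes f: "hd j f" and g: "hd k g" and gf: "good (hm j f)" and gg: "good (hm k g)"
  shows "good (hm (j + k) (bp j f k g))"
  unfolding good_def
proof (intro conjI ballI)
  show "hm (j + k) (bp j f k g) \<in> Dplus" using hd_bp[OF f g] by simp
  fix x assume x: "x \<in> VU"
  have e: "\<rho> (hm (j + k) (bp j f k g)) x =
      \<rho> (hm j f) (\<rho> (hm k g) x) - \<rho> (hm k g) (\<rho> (hm j f) x) - sc (1/2 * psih j f k g) x"
    using comm[OF f g VU_K[OF x]] by (simp add: algebra_simps)
  show "\<rho> (hm (j + k) (bp j f k g)) x \<in> VU"
    unfolding e using gf gg x unfolding good_def by (intro VU_diff VU_sc) auto
qed

lemma good_lin: assumes f: "hd k f" and g: "hd k g" and gf: "good (hm k f)" and gg: "good (hm k g)"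
  shows "good (hm k (smult z f + smult w g))"
  unfolding good_def
proof (intro conjI ballI)
  show "hm k (smult z f + smult w g) \<in> Dplus" using hd_comb[OF f g] by simp
  fix x assume x: "x \<in> VU"
  show "\<rho> (hm k (smult z f + smult w g)) x \<in> VU"
    unfolding rlin[OF f g VU_K[OF x]] using gf gg x unfolding good_def by (intro VU_add VU_sc) auto
qed

lemma good_E1: "good (hm k (cen k))"
  unfolding good_def by (simp add: hd_cen VU_E1)

lemma good_E3: "good (hm k (cen k ^ 3))"
  unfolding good_def by (simp add: hd_cen3 E3_VU)

lemma good_zero: "good (hm k 0)"
  unfolding good_def using rzero VU_K VU_0 by (simp del: hm_0)

lemma good_nz: assumes k: "k \<noteq> 0" shows "hd k f \<Longrightarrow> good (hm k f)"
proof (induction "degree f" arbitrary: f rule: less_induct)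
  case less
  obtain h r where fe: "f = qk k * h + r" and hh: "hd k h" and hr: "hd k r" and dr: "degree r \<le> 1"
    and dh: "h = 0 \<or> degree h < degree f"
    using div_step[OF k less.prems] by blast
  have gh: "good (hm k h)" using dh less.hyps[OF _ hh] good_zero by auto
  have gqh: "good (hm k (qk k * h))"
    using good_bp[OF hd_cen3[of 0] hh good_E3 gh] by (simp add: bp_q)
  have hqh: "hd k (qk k * h)" using hd_bp[OF hd_cen3[of 0] hh] by (simp add: bp_q)
  have gr: "good (hm k r)"
  proof -
    have "r = smult (coeff r 1) (cen k)" by (rule odd_deg1[OF hr dr])
    then have "r = smult (coeff r 1) (cen k) + smult 0 (cen k)" by simp
    then show ?thesis using good_lin[OF hd_cen hd_cen good_E1 good_E1] by metis
  qed
  have "f = smult 1 (qk k * h) + smult 1 r" using fe by simp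
  then show ?case using good_lin[OF hqh hr gqh gr] by metis
qed

lemma good_0: assumes f: "hd 0 f" shows "good (hm 0 f)"
  unfolding good_def
proof (intro conjI ballI)
  show "hm 0 f \<in> Dplus" using f by simp
  fix x assume "x \<in> VU"
  then show "\<rho> (hm 0 f) x \<in> VU"
  proof (induction rule: VU.induct)
    case VU_v then show ?case using hw[OF _ f] VU_0 by simp
  next
    case (VU_L x j)
    have xK: "x \<in> K" by (rule VU_K[OF VU_L.hyps(1)])
    have e: "\<rho> (hm 0 f) (\<rho> (hm j (- cen j)) x) =
      \<rho> (hm j (- cen j)) (\<rho> (hm 0 f) x) + \<rho> (hm (0 + j) (bp 0 f j (- cen j))) x
      + sc (1/2 * psih 0 f j (- cen j)) x"
      by (rule comm[OF f hd_negcen xK])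
    have "\<rho> (hm j (bp 0 f j (- cen j))) x \<in> VU"
    proof (cases "j = 0")
      case True
      then show ?thesis using rzero[OF xK] VU_0 by (simp add: bp_00 del: hm_0)
    next
      case False
      have "good (hm j (bp 0 f j (- cen j)))"
        by (rule good_nz[OF False]) (use hd_bp[OF f hd_negcen[of j]] in simp)
      then show ?thesis using VU_L.hyps(1) by (simp add: good_def)
    qed
    moreover have "\<rho> (hm j (- cen j)) (\<rho> (hm 0 f) x) \<in> VU"
      using VU.VU_L[OF VU_L.IH, of j] by (simp add: Lm_def)
    ultimately show ?case unfolding Lm_def e by (simp add: VU.VU_add)
  next
    case (VU_add x y)
    then show ?case using radd[of "hm 0 f" x y] f by (simp add: VU.VU_add)
  next
    case (VU_sc x z)
    then show ?case using rsc[of "hm 0 f" z x] f by (simp add: VU.VU_sc)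
  qed
qed

theorem VU_inv: assumes a: "a \<in> Dplus" and x: "x \<in> VU" shows "\<rho> a x \<in> VU"
proof (rule decomp[OF a VU_K[OF x]])
  show "0 \<in> VU" by (rule VU_0)
  show "\<And>y z. y \<in> VU \<Longrightarrow> z \<in> VU \<Longrightarrow> y + z \<in> VU" by (rule VU_add)
  fix k
  have hk: "hd k (a k)" by (rule Dplus_hd[OF a])
  have "good (hm k (a k))"
    using good_0 good_nz hk by (cases "k = 0") auto
  then show "\<rho> (hm k (a k)) x \<in> VU" using x by (simp add: good_def)
qed

end

locale vside =
  fixes sc :: "complex \<Rightarrow> 'v::ab_group_add \<Rightarrow> 'v" and \<rho> :: "dop \<Rightarrow> 'v \<Rightarrow> 'v" and v0 :: 'v
  assumes V: "is_Vplus sc (1/2) \<rho> v0"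
begin

lemma Vrep: "Dplus_rep sc (1/2) \<rho>"
  using V unfolding is_Vplus_def by (rule conjunct1)

lemma vs: "vector_space sc"
  using Vrep unfolding Dplus_rep_def by (rule conjunct1)

lemma linr': "\<forall>a\<in>Dplus. Vector_Spaces.linear sc sc (\<rho> a)"
  using Vrep unfolding Dplus_rep_def by (rule conjunct1[OF conjunct2])

lemma lina': "\<forall>a\<in>Dplus. \<forall>b\<in>Dplus. \<forall>z w v.
        \<rho> (\<lambda>k. dscale z a k + dscale w b k) v = sc z (\<rho> a v) + sc w (\<rho> b v)"
  using Vrep unfolding Dplus_rep_def by (rule conjunct1[OF conjunct2[OF conjunct2]])

lemma comm': "\<forall>a\<in>Dplus. \<forall>b\<in>Dplus. \<forall>v.
        \<rho> a (\<rho> b v) - \<rho> b (\<rho> a v) = \<rho> (dbracket a b) v + sc (1/2 * Psi a b) v"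
  using Vrep unfolding Dplus_rep_def by (rule conjunct2[OF conjunct2[OF conjunct2]])

lemma linr: "a \<in> Dplus \<Longrightarrow> Vector_Spaces.linear sc sc (\<rho> a)"
  using linr' by (rule bspec)

lemma radd0: "a \<in> Dplus \<Longrightarrow> \<rho> a (x + y) = \<rho> a x + \<rho> a y"
  by (rule module_hom.add[OF linr[unfolded module_hom_iff_linear[symmetric]]])

lemma rsc0: "a \<in> Dplus \<Longrightarrow> \<rho> a (sc z x) = sc z (\<rho> a x)"
  by (rule module_hom.scale[OF linr[unfolded module_hom_iff_linear[symmetric]]])

lemma lina0: "a \<in> Dplus \<Longrightarrow> b \<in> Dplus \<Longrightarrow> \<rho> (\<lambda>k. dscale z a k + dscale w b k) x = sc z (\<rho> a x) + sc w (\<rho> b x)"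
  using lina' by simp

lemma comm0: "a \<in> Dplus \<Longrightarrow> b \<in> Dplus \<Longrightarrow> \<rho> a (\<rho> b x) - \<rho> b (\<rho> a x) = \<rho> (dbracket a b) x + sc (1/2 * Psi a b) x"
  using comm' by simp

lemma v0nz: "v0 \<noteq> 0"
  using V unfolding is_Vplus_def by (rule conjunct1[OF conjunct2])

lemma Vhw: "\<forall>a\<in>Dplus. (\<forall>j\<le>0. a j = 0) \<longrightarrow> \<rho> a v0 = 0"
  using V unfolding is_Vplus_def by (rule conjunct1[OF conjunct2[OF conjunct2]])

lemma Vhw0: "\<forall>a\<in>Dplus. (\<forall>j. j \<noteq> 0 \<longrightarrow> a j = 0) \<longrightarrow> \<rho> a v0 = 0"
  using V unfolding is_Vplus_def by (rule conjunct1[OF conjunct2[OF conjunct2[OF conjunct2]]])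

lemma Virr: "\<forall>S. module.subspace sc S \<and> (\<forall>a\<in>Dplus. \<forall>v\<in>S. \<rho> a v \<in> S) \<longrightarrow> S = {0} \<or> S = UNIV"
  using V unfolding is_Vplus_def by (rule conjunct2[OF conjunct2[OF conjunct2[OF conjunct2]]])

lemma irr: "module.subspace sc S \<Longrightarrow> (\<forall>a\<in>Dplus. \<forall>x\<in>S. \<rho> a x \<in> S) \<Longrightarrow> S = {0} \<or> S = UNIV"
  using Virr by blast

lemma hw0: assumes k: "0 \<le> k" and f: "hd k f" shows "\<rho> (hm k f) v0 = 0"
proof -
  have D: "hm k f \<in> Dplus" using f by simp
  show ?thesis
  proof (cases "k = 0")
    case True
    have "\<forall>j. j \<noteq> 0 \<longrightarrow> hm k f j = 0" using True by (simp add: hm_def)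
    then show ?thesis using bspec[OF Vhw0 D] by (rule mp[rotated])
  next
    case False
    have "\<forall>j\<le>0. hm k f j = 0" using k False by (simp add: hm_def)
    then show ?thesis using bspec[OF Vhw D] by (rule mp[rotated])
  qed
qed

lemma comm_hm: "hd j f \<Longrightarrow> hd k g \<Longrightarrow>
  \<rho> (hm j f) (\<rho> (hm k g) x) = \<rho> (hm k g) (\<rho> (hm j f) x) + \<rho> (hm (j + k) (bp j f k g)) x + sc (1/2 * psih j f k g) x"
proof -
  assume f: "hd j f" and g: "hd k g"
  have "\<rho> (hm j f) (\<rho> (hm k g) x) - \<rho> (hm k g) (\<rho> (hm j f) x) = \<rho> (hm (j + k) (bp j f k g)) x + sc (1/2 * psih j f k g) x"
    using comm0[of "hm j f" "hm k g" x] f g by (simp add: dbracket_hm Psi_hm)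
  then show ?thesis by (simp add: algebra_simps)
qed

lemma hrep_inst: "hrep sc \<rho> UNIV"
proof (rule hrep.intro[OF vs], rule hrep_axioms.intro)
  show "\<And>j f k g x. hd j f \<Longrightarrow> hd k g \<Longrightarrow> x \<in> UNIV \<Longrightarrow>
    \<rho> (hm j f) (\<rho> (hm k g) x) = \<rho> (hm k g) (\<rho> (hm j f) x) + \<rho> (hm (j + k) (bp j f k g)) x + sc (1/2 * psih j f k g) x"
    by (rule comm_hm)
qed (simp_all add: radd0 rsc0 lina0)

sublocale hr: hrep sc \<rho> UNIV by (rule hrep_inst)

abbreviation E0 :: dop where "E0 \<equiv> hm 0 (cen 0)"

definition EP :: "'v set" where
  "EP = {x. \<exists>n::nat. 1 \<le> n \<and> \<rho> E0 x = sc (- of_nat n) x}"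

definition killed :: "'v \<Rightarrow> bool" where
  "killed u \<longleftrightarrow> (\<forall>p g. 0 < p \<longrightarrow> hd p g \<longrightarrow> \<rho> (hm p g) u = 0)"

inductive_set W0 for u where
  W0_u: "u \<in> W0 u"
| W0_h: "x \<in> W0 u \<Longrightarrow> hd 0 h \<Longrightarrow> \<rho> (hm 0 h) x \<in> W0 u"

inductive_set Mn for u where
  Mn_W: "x \<in> W0 u \<Longrightarrow> x \<in> Mn u"
| Mn_n: "x \<in> Mn u \<Longrightarrow> k < 0 \<Longrightarrow> hd k f \<Longrightarrow> \<rho> (hm k f) x \<in> Mn u"

lemma W0_pos: "x \<in> W0 u \<Longrightarrow> killed u \<Longrightarrow> 0 < p \<Longrightarrow> hd p g \<Longrightarrow> \<rho> (hm p g) x = 0"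
proof (induction x arbitrary: p g rule: W0.induct)
  case W0_u then show ?case by (simp add: killed_def)
next
  case (W0_h x h)
  have e: "\<rho> (hm p g) (\<rho> (hm 0 h) x) = \<rho> (hm 0 h) (\<rho> (hm p g) x) + \<rho> (hm (p + 0) (bp p g 0 h)) x
      + sc (1/2 * psih p g 0 h) x"
    by (rule comm_hm[OF W0_h.prems(3) W0_h.hyps(2)])
  have z1: "\<rho> (hm p g) x = 0" using W0_h.IH[OF W0_h.prems] .
  have hb: "hd p (bp p g 0 h)" using hd_bp[OF W0_h.prems(3) W0_h.hyps(2)] by simp
  have z2: "\<rho> (hm p (bp p g 0 h)) x = 0"
    using W0_h.IH[OF W0_h.prems(1,2) hb] by simp
  have z3: "psih p g 0 h = 0" using W0_h.prems(2) by (simp add: psih_def)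
  show ?case unfolding e z1 using z2 z3 hr.r0[of "hm 0 h"] W0_h.hyps(2) by simp
qed

lemma span_map: "a \<in> Dplus \<Longrightarrow> (\<forall>x\<in>S. \<rho> a x \<in> hr.span T) \<Longrightarrow> y \<in> hr.span S \<Longrightarrow> \<rho> a y \<in> hr.span T"
proof -
  assume a: "a \<in> Dplus" and ST: "\<forall>x\<in>S. \<rho> a x \<in> hr.span T" and y: "y \<in> hr.span S"
  show ?thesis using y
  proof (induction rule: hr.span_induct_alt)
    case base then show ?case using hr.r0[OF a] hr.span_zero by simp
  next
    case (step c x y)
    then show ?case using ST radd0[OF a] rsc0[OF a] by (simp add: hr.span_add hr.span_scale)
  qed
qed

lemma Mn_inv: "x \<in> Mn u \<Longrightarrow> killed u \<Longrightarrow> hd k f \<Longrightarrow> \<rho> (hm k f) x \<in> hr.span (Mn u)"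
proof (induction x arbitrary: k f rule: Mn.induct)
  case (Mn_W x)
  consider "0 < k" | "k = 0" | "k < 0" by linarith
  then show ?case
  proof cases
    case 1 then show ?thesis using W0_pos[OF Mn_W.hyps Mn_W.prems(1) 1 Mn_W.prems(2)] hr.span_zero by simp
  next
    case 2 then show ?thesis using W0_h[OF Mn_W.hyps, of f] Mn_W.prems(2)
      by (auto intro: hr.span_base Mn.Mn_W)
  next
    case 3 then show ?thesis using Mn.Mn_n[OF Mn.Mn_W[OF Mn_W.hyps] 3 Mn_W.prems(2)]
      by (auto intro: hr.span_base)
  qed
next
  case (Mn_n x k' f')
  show ?case
  proof (cases "k < 0")
    case True then show ?thesis
      using Mn.Mn_n[OF Mn.Mn_n[OF Mn_n.hyps] True Mn_n.prems(2)] by (auto intro: hr.span_base)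
  next
    case False
    have e: "\<rho> (hm k f) (\<rho> (hm k' f') x) = \<rho> (hm k' f') (\<rho> (hm k f) x) + \<rho> (hm (k + k') (bp k f k' f')) x
      + sc (1/2 * psih k f k' f') x"
      by (rule comm_hm[OF Mn_n.prems(2) Mn_n.hyps(3)])
    have t1: "\<rho> (hm k' f') (\<rho> (hm k f) x) \<in> hr.span (Mn u)"
    proof (rule span_map[of _ "Mn u"])
      show "hm k' f' \<in> Dplus" using Mn_n.hyps(3) by simp
      show "\<forall>y\<in>Mn u. \<rho> (hm k' f') y \<in> hr.span (Mn u)"
        using Mn.Mn_n[OF _ Mn_n.hyps(2,3)] by (auto intro: hr.span_base)
      show "\<rho> (hm k f) x \<in> hr.span (Mn u)" by (rule Mn_n.IH[OF Mn_n.prems])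
    qed
    have t2: "\<rho> (hm (k + k') (bp k f k' f')) x \<in> hr.span (Mn u)"
      by (rule Mn_n.IH[OF Mn_n.prems(1) hd_bp[OF Mn_n.prems(2) Mn_n.hyps(3)]])
    have t3: "sc (1/2 * psih k f k' f') x \<in> hr.span (Mn u)"
      using Mn_n.hyps(1) by (intro hr.span_scale hr.span_base)
    show ?thesis unfolding e using t1 t2 t3 by (intro hr.span_add)
  qed
qed

lemma Mn_span_inv: assumes ku: "killed u" and a: "a \<in> Dplus" and y: "y \<in> hr.span (Mn u)"
  shows "\<rho> a y \<in> hr.span (Mn u)"
proof (rule hr.decomp[OF a])
  show "y \<in> UNIV" by simp
  show "0 \<in> hr.span (Mn u)" by (rule hr.span_zero)
  show "\<And>y z. y \<in> hr.span (Mn u) \<Longrightarrow> z \<in> hr.span (Mn u) \<Longrightarrow> y + z \<in> hr.span (Mn u)"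
    by (rule hr.span_add)
  fix k
  show "\<rho> (hm k (a k)) y \<in> hr.span (Mn u)"
  proof (rule span_map[OF _ _ y])
    show "hm k (a k) \<in> Dplus" using Dplus_hd[OF a] by simp
    show "\<forall>x\<in>Mn u. \<rho> (hm k (a k)) x \<in> hr.span (Mn u)"
      using Mn_inv[OF _ ku Dplus_hd[OF a]] by blast
  qed
qed

lemma W0_eig: "x \<in> W0 u \<Longrightarrow> \<rho> E0 u = sc \<mu> u \<Longrightarrow> \<rho> E0 x = sc \<mu> x"
proof (induction x rule: W0.induct)
  case W0_u then show ?case .
next
  case (W0_h x h)
  show ?case using hr.eigen[OF _ W0_h.IH[OF W0_h.prems] W0_h.hyps(2)] by simp
qed

lemma Mn_eig: "x \<in> Mn u \<Longrightarrow> \<rho> E0 u = sc (- of_nat N) u \<Longrightarrow> \<exists>n\<ge>N. \<rho> E0 x = sc (- of_nat n) x"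
proof (induction x rule: Mn.induct)
  case (Mn_W x) then show ?case using W0_eig[OF Mn_W.hyps] by blast
next
  case (Mn_n x k f)
  obtain n where n: "n \<ge> N" "\<rho> E0 x = sc (- of_nat n) x" using Mn_n.IH[OF Mn_n.prems] by blast
  have e: "\<rho> E0 (\<rho> (hm k f) x) = sc (- of_nat n + of_int k) (\<rho> (hm k f) x)"
    using hr.eigen[OF _ n(2) Mn_n.hyps(3)] by simp
  have "(- of_nat n + of_int k :: complex) = - of_nat (n + nat (- k))"
    using Mn_n.hyps(2) by simp
  then show ?case using e n(1) by (intro exI[of _ "n + nat (- k)"]) simp
qed

lemma rsum: "finite t \<Longrightarrow> a \<in> Dplus \<Longrightarrow> \<rho> a (\<Sum>x\<in>t. g x) = (\<Sum>x\<in>t. \<rho> a (g x))"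
  by (induction t rule: finite_induct) (simp_all add: hr.r0 radd0)

definition ev :: "'v \<Rightarrow> nat" where
  "ev x = (SOME n. 1 \<le> n \<and> \<rho> E0 x = sc (- of_nat n) x)"

lemma ev: "x \<in> EP \<Longrightarrow> 1 \<le> ev x \<and> \<rho> E0 x = sc (- of_nat (ev x)) x"
  unfolding EP_def ev_def by (rule someI_ex) simp

lemma E0v0: "\<rho> E0 v0 = 0"
  using hw0[OF _ hd_cen, of 0] by simp

lemma proj_aux: "finite t \<Longrightarrow> hr.subspace T \<Longrightarrow> (\<forall>x\<in>T. \<rho> E0 x \<in> T) \<Longrightarrow>
   \<forall>x z r. x \<in> T \<longrightarrow> t \<subseteq> EP \<longrightarrow> x - sc z v0 = (\<Sum>a\<in>t. sc (r a) a) \<longrightarrow> sc z v0 \<in> T"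
proof (induction t rule: finite_induct)
  case empty
  show ?case by auto
next
  case (insert a0 t)
  show ?case
  proof (intro allI impI)
    fix x z r assume x: "x \<in> T" and tE: "insert a0 t \<subseteq> EP" and xe: "x - sc z v0 = (\<Sum>a\<in>insert a0 t. sc (r a) a)"
    have E0D: "E0 \<in> Dplus" by (simp add: hd_cen)
    define n0 where "n0 = ev a0"
    have n0: "1 \<le> n0" "\<rho> E0 a0 = sc (- of_nat n0) a0" using ev[of a0] tE by (auto simp: n0_def)
    define S where "S = (\<Sum>a\<in>t. sc (r a) a)"
    have xS: "x = sc z v0 + sc (r a0) a0 + S" using xe insert.hyps by (simp add: S_def algebra_simps)
    have ES: "\<rho> E0 S = (\<Sum>a\<in>t. sc (r a * - of_nat (ev a)) a)"
      unfolding S_def rsum[OF insert.hyps(1) E0D]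
    proof (rule sum.cong[OF refl])
      fix a assume "a \<in> t"
      then have "\<rho> E0 a = sc (- of_nat (ev a)) a" using ev tE by blast
      then show "\<rho> E0 (sc (r a) a) = sc (r a * - of_nat (ev a)) a" by (simp add: rsc0[OF E0D])
    qed
    define x' where "x' = \<rho> E0 x + sc (of_nat n0) x"
    have x'T: "x' \<in> T" unfolding x'_def using insert.prems x
      by (simp add: hr.subspace_add hr.subspace_scale)
    define r' where "r' a = r a * (of_nat n0 - of_nat (ev a))" for a
    have "x' - sc (of_nat n0 * z) v0 = (\<Sum>a\<in>t. sc (r' a) a)"
    proof -
      have "\<rho> E0 x = sc (r a0 * - of_nat n0) a0 + \<rho> E0 S"
        unfolding xS using n0(2) E0v0 by (simp add: radd0[OF E0D] rsc0[OF E0D])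
      then have "x' - sc (of_nat n0 * z) v0 = \<rho> E0 S + sc (of_nat n0) S"
        unfolding x'_def xS by (simp add: algebra_simps hr.scale_right_distrib)
      also have "\<dots> = (\<Sum>a\<in>t. sc (r a * - of_nat (ev a)) a) + (\<Sum>a\<in>t. sc (of_nat n0 * r a) a)"
        unfolding ES by (simp only: S_def hr.scale_sum_right hr.scale_scale)
      also have "\<dots> = (\<Sum>a\<in>t. sc (r a * - of_nat (ev a)) a + sc (of_nat n0 * r a) a)"
        by (rule sum.distrib[symmetric])
      also have "\<dots> = (\<Sum>a\<in>t. sc (r' a) a)"
        by (rule sum.cong[OF refl]) (simp add: r'_def hr.scale_left_distrib[symmetric] algebra_simps)
      finally show ?thesis .
    qed
    then have "sc (of_nat n0 * z) v0 \<in> T" using insert.IH[OF insert.prems] x'T tE by blast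
    then have m: "sc (1 / of_nat n0) (sc (of_nat n0 * z) v0) \<in> T" using insert.prems(1) by (rule hr.subspace_scale[rotated])
    have nz: "n0 \<noteq> 0" using n0(1) by simp
    have eq: "sc (1 / of_nat n0) (sc (of_nat n0 * z) v0) = sc z v0" using nz by simp
    show "sc z v0 \<in> T" using m unfolding eq .
  qed
qed

lemma proj: "hr.subspace T \<Longrightarrow> (\<forall>x\<in>T. \<rho> E0 x \<in> T) \<Longrightarrow> x \<in> T \<Longrightarrow> x - sc z v0 \<in> hr.span EP \<Longrightarrow> sc z v0 \<in> T"
  unfolding hr.span_explicit using proj_aux by blast

lemma EP_indep: "sc z v0 \<in> hr.span EP \<Longrightarrow> z = 0"
proof -
  assume h: "sc z v0 \<in> hr.span EP"
  have "sc (- z) v0 \<in> {0}"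
    by (rule proj[of "{0}" 0]) (use h hr.r0 in \<open>auto simp: hd_cen\<close>)
  then show "z = 0" using v0nz by simp
qed

lemma sing_V: "u \<in> UNIV \<Longrightarrow> 0 < N \<Longrightarrow> \<rho> E0 u = sc (- of_nat N) u \<Longrightarrow>
   (\<forall>p g. 0 < p \<longrightarrow> hd p g \<longrightarrow> \<rho> (hm p g) u = 0) \<Longrightarrow> u = 0"
proof -
  assume N: "0 < N" and eu: "\<rho> E0 u = sc (- of_nat N) u" and k: "\<forall>p g. 0 < p \<longrightarrow> hd p g \<longrightarrow> \<rho> (hm p g) u = 0"
  have ku: "killed u" using k by (simp add: killed_def)
  have "hr.span (Mn u) = {0} \<or> hr.span (Mn u) = UNIV"
    by (rule irr) (use Mn_span_inv[OF ku] in auto)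
  moreover have "hr.span (Mn u) \<noteq> UNIV"
  proof
    assume U: "hr.span (Mn u) = UNIV"
    have "Mn u \<subseteq> EP"
    proof
      fix x assume "x \<in> Mn u"
      then obtain n where "n \<ge> N" "\<rho> E0 x = sc (- of_nat n) x" using Mn_eig[OF _ eu] by blast
      then show "x \<in> EP" using N unfolding EP_def by (intro CollectI exI[of _ n]) simp
    qed
    then have "v0 \<in> hr.span EP" using U hr.span_mono by blast
    then have "(1::complex) = 0" using EP_indep[of 1] by simp
    then show False by simp
  qed
  ultimately have "hr.span (Mn u) = {0}" by blast
  moreover have "u \<in> hr.span (Mn u)" by (intro hr.span_base Mn_W W0_u)
  ultimately show "u = 0" by simp
qed

lemma hwm_inst: "hwm sc \<rho> UNIV v0"
proof (rule hwm.intro[OF hrep_inst], rule hwm_axioms.intro)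
  show "v0 \<in> UNIV" by simp
  show "\<And>k f. 0 \<le> k \<Longrightarrow> hd k f \<Longrightarrow> \<rho> (hm k f) v0 = 0" by (rule hw0)
  show "\<And>u N. u \<in> UNIV \<Longrightarrow> 0 < N \<Longrightarrow> \<rho> E0 u = sc (- of_nat N) u \<Longrightarrow>
       \<forall>p g. 0 < p \<longrightarrow> hd p g \<longrightarrow> \<rho> (hm p g) u = 0 \<Longrightarrow> u = 0" by (rule sing_V)
qed

sublocale vh: hwm sc \<rho> UNIV v0 by (rule hwm_inst)

lemma VU_UNIV: "vh.VU = UNIV"
proof -
  have "vh.VU = {0} \<or> vh.VU = UNIV"
  proof (rule irr)
    show "hr.subspace vh.VU"
      by (rule hr.subspaceI) (auto intro: vh.VU_0 vh.VU_add vh.VU_sc)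
    show "\<forall>a\<in>Dplus. \<forall>x\<in>vh.VU. \<rho> a x \<in> vh.VU" using vh.VU_inv by blast
  qed
  moreover have "vh.VU \<noteq> {0}" using vh.VU_v v0nz by blast
  ultimately show ?thesis by blast
qed

end

context vside
begin

lemma W0v0: "x \<in> W0 v0 \<Longrightarrow> x = v0 \<or> x = 0"
proof (induction rule: W0.induct)
  case W0_u then show ?case by simp
next
  case (W0_h x h)
  then show ?case using hw0[OF _ W0_h.hyps(2)] hr.r0[of "hm 0 h"] by auto
qed

lemma zero_EP: "0 \<in> EP"
  unfolding EP_def using hr.r0[of E0] by (auto simp: hd_cen intro: exI[of _ 1])

lemma eig_neg: assumes x: "\<rho> E0 x = sc (- of_nat n) x" and k: "k < 0" and f: "hd k f"
  shows "\<rho> (hm k f) x \<in> EP"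
proof -
  have e: "\<rho> E0 (\<rho> (hm k f) x) = sc (- of_nat n + of_int k) (\<rho> (hm k f) x)"
    using hr.eigen[OF _ x f] by simp
  have "(- of_nat n + of_int k :: complex) = - of_nat (n + nat (- k))" using k by simp
  then show ?thesis using e k unfolding EP_def by (intro CollectI exI[of _ "n + nat (- k)"]) simp
qed

lemma EP_map: assumes x: "x \<in> EP" and k: "k \<le> 0" and f: "hd k f" shows "\<rho> (hm k f) x \<in> EP"
proof -
  obtain n where n: "1 \<le> n" "\<rho> E0 x = sc (- of_nat n) x" using x unfolding EP_def by blast
  show ?thesis
  proof (cases "k = 0")
    case True
    have "\<rho> E0 (\<rho> (hm k f) x) = sc (- of_nat n) (\<rho> (hm k f) x)" using hr.eigen[OF _ n(2) f] True by simp
    then show ?thesis using n(1) unfolding EP_def by blast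
  next
    case False then show ?thesis using eig_neg[OF n(2) _ f] k by simp
  qed
qed

lemma v0_map: assumes k: "k \<le> 0" and f: "hd k f" shows "\<rho> (hm k f) v0 \<in> EP"
proof (cases "k = 0")
  case True then show ?thesis using hw0[of k f] f zero_EP by simp
next
  case False
  have "\<rho> E0 v0 = sc (- of_nat 0) v0" using E0v0 by simp
  then show ?thesis using eig_neg[of v0 0 k f] False k f by simp
qed

lemma Mn_v0: "x \<in> Mn v0 \<Longrightarrow> x = v0 \<or> x \<in> EP"
proof (induction rule: Mn.induct)
  case (Mn_W x) then show ?case using W0v0 zero_EP by blast
next
  case (Mn_n x k f)
  then show ?case using v0_map[of k f] EP_map[of x k f] by auto
qed

lemma killed_v0: "killed v0"
  unfolding killed_def using hw0 by simp

lemma span_Mn_v0: "hr.span (Mn v0) = UNIV"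
proof -
  have "hr.span (Mn v0) = {0} \<or> hr.span (Mn v0) = UNIV"
    by (rule irr) (use Mn_span_inv[OF killed_v0] in auto)
  moreover have "v0 \<in> hr.span (Mn v0)" by (intro hr.span_base Mn_W W0_u)
  ultimately show ?thesis using v0nz by auto
qed

lemma decomp_v0: "\<exists>z. x - sc z v0 \<in> hr.span EP"
proof -
  have "Mn v0 \<subseteq> insert v0 EP" using Mn_v0 by blast
  then have "x \<in> hr.span (insert v0 EP)" using span_Mn_v0 hr.span_mono by blast
  then show ?thesis unfolding hr.span_insert by blast
qed

definition pi :: "'v \<Rightarrow> complex" where
  "pi x = (THE z. x - sc z v0 \<in> hr.span EP)"

lemma pi_unique: "x - sc z v0 \<in> hr.span EP \<Longrightarrow> pi x = z"
proof -
  assume h: "x - sc z v0 \<in> hr.span EP"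
  have u: "z' = z" if "x - sc z' v0 \<in> hr.span EP" for z'
  proof -
    have "(x - sc z' v0) - (x - sc z v0) \<in> hr.span EP" using that h by (rule hr.span_diff)
    then have "sc (z - z') v0 \<in> hr.span EP" by (simp add: hr.scale_left_diff_distrib)
    then have "z - z' = 0" by (rule EP_indep)
    then show "z' = z" by simp
  qed
  show ?thesis unfolding pi_def using h u by (rule the_equality)
qed

lemma pi_spec: "x - sc (pi x) v0 \<in> hr.span EP"
  using decomp_v0[of x] pi_unique by metis

lemma pi_add: "pi (x + y) = pi x + pi y"
proof (rule pi_unique)
  have "(x - sc (pi x) v0) + (y - sc (pi y) v0) \<in> hr.span EP" using pi_spec by (intro hr.span_add)
  then show "x + y - sc (pi x + pi y) v0 \<in> hr.span EP" by (simp add: hr.scale_left_distrib algebra_simps)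
qed

lemma pi_sc: "pi (sc c x) = c * pi x"
proof (rule pi_unique)
  have "sc c (x - sc (pi x) v0) \<in> hr.span EP" using pi_spec by (intro hr.span_scale)
  then show "sc c x - sc (c * pi x) v0 \<in> hr.span EP" by (simp add: hr.scale_right_diff_distrib)
qed

lemma pi_v0: "pi v0 = 1"
  by (rule pi_unique) (simp add: hr.span_zero)

lemma pi_zero: "pi 0 = 0"
  by (rule pi_unique) (simp add: hr.span_zero)

lemma pi_neg: assumes k: "k \<le> 0" and f: "hd k f" shows "pi (\<rho> (hm k f) x) = 0"
proof (rule pi_unique)
  have D: "hm k f \<in> Dplus" using f by simp
  define y where "y = x - sc (pi x) v0"
  have y: "y \<in> hr.span EP" using pi_spec by (simp add: y_def)
  have x: "x = sc (pi x) v0 + y" by (simp add: y_def)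
  have "\<rho> (hm k f) y \<in> hr.span EP"
    by (rule span_map[OF D _ y]) (use EP_map[OF _ k f] in \<open>auto intro: hr.span_base\<close>)
  moreover have "\<rho> (hm k f) v0 \<in> hr.span EP" using v0_map[OF k f] by (rule hr.span_base)
  ultimately have "sc (pi x) (\<rho> (hm k f) v0) + \<rho> (hm k f) y \<in> hr.span EP"
    by (intro hr.span_add hr.span_scale)
  then show "\<rho> (hm k f) x - sc 0 v0 \<in> hr.span EP"
    by (subst x) (simp add: radd0[OF D] rsc0[OF D])
qed

definition scd :: "complex \<Rightarrow> ('v \<Rightarrow> complex) \<Rightarrow> ('v \<Rightarrow> complex)" where
  "scd z \<phi> = (\<lambda>x. z * \<phi> x)"

definition rhod :: "dop \<Rightarrow> ('v \<Rightarrow> complex) \<Rightarrow> ('v \<Rightarrow> complex)" where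
  "rhod a \<phi> = (\<lambda>x. \<phi> (\<rho> (theta a) x))"

definition LF :: "('v \<Rightarrow> complex) set" where
  "LF = {\<phi>. (\<forall>x y. \<phi> (x + y) = \<phi> x + \<phi> y) \<and> (\<forall>z x. \<phi> (sc z x) = z * \<phi> x)}"

lemma LF_add: "\<phi> \<in> LF \<Longrightarrow> \<phi> (x + y) = \<phi> x + \<phi> y" unfolding LF_def by blast
lemma LF_sc: "\<phi> \<in> LF \<Longrightarrow> \<phi> (sc z x) = z * \<phi> x" unfolding LF_def by blast
lemma LF_0: "\<phi> \<in> LF \<Longrightarrow> \<phi> 0 = 0" using LF_sc[of \<phi> 0 0] by simp

lemma vs_d: "vector_space scd"
  unfolding vector_space_def scd_def by (simp add: fun_eq_iff algebra_simps)

lemma pi_LF: "pi \<in> LF"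
  unfolding LF_def by (simp add: pi_add pi_sc)

lemma rhod_hm: "rhod (hm j f) \<phi> = (\<lambda>x. \<phi> (\<rho> (hm (- j) (pshift f (- j))) x))"
  by (simp add: rhod_def theta_hm)

lemma hrep_d: "hrep scd rhod LF"
proof (rule hrep.intro[OF vs_d], rule hrep_axioms.intro)
  show "0 \<in> LF" by (simp add: LF_def)
  show "\<And>x y. x \<in> LF \<Longrightarrow> y \<in> LF \<Longrightarrow> x + y \<in> LF" by (simp add: LF_def algebra_simps)
  show "\<And>x z. x \<in> LF \<Longrightarrow> scd z x \<in> LF" by (simp add: LF_def scd_def algebra_simps)
  show "\<And>a x. a \<in> Dplus \<Longrightarrow> x \<in> LF \<Longrightarrow> rhod a x \<in> LF"
  proof -
    fix a and \<phi> :: "'v \<Rightarrow> complex" assume a: "a \<in> Dplus" and p: "\<phi> \<in> LF"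
    have ta: "theta a \<in> Dplus" by (rule Dplus_theta[OF a])
    show "rhod a \<phi> \<in> LF" unfolding LF_def rhod_def
      using radd0[OF ta] rsc0[OF ta] LF_add[OF p] LF_sc[OF p] by simp
  qed
  show "\<And>a x y. a \<in> Dplus \<Longrightarrow> rhod a (x + y) = rhod a x + rhod a y" by (simp add: rhod_def fun_eq_iff)
  show "\<And>a z x. a \<in> Dplus \<Longrightarrow> rhod a (scd z x) = scd z (rhod a x)" by (simp add: rhod_def scd_def fun_eq_iff)
  show "\<And>a b x z w. a \<in> Dplus \<Longrightarrow> b \<in> Dplus \<Longrightarrow> x \<in> LF \<Longrightarrow>
      rhod (\<lambda>k. dscale z a k + dscale w b k) x = scd z (rhod a x) + scd w (rhod b x)"
  proof -
    fix a b z w and \<phi> :: "'v \<Rightarrow> complex" assume a: "a \<in> Dplus" and b: "b \<in> Dplus" and p: "\<phi> \<in> LF"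
    show "rhod (\<lambda>k. dscale z a k + dscale w b k) \<phi> = scd z (rhod a \<phi>) + scd w (rhod b \<phi>)"
      unfolding rhod_def scd_def theta_comb
      using lina0[OF Dplus_theta[OF a] Dplus_theta[OF b]] LF_add[OF p] LF_sc[OF p] by (simp add: fun_eq_iff)
  qed
  show "\<And>j f k g x. hd j f \<Longrightarrow> hd k g \<Longrightarrow> x \<in> LF \<Longrightarrow>
      rhod (hm j f) (rhod (hm k g) x) = rhod (hm k g) (rhod (hm j f) x) + rhod (hm (j + k) (bp j f k g)) x
      + scd (1/2 * psih j f k g) x"
  proof -
    fix j f k g and \<phi> :: "'v \<Rightarrow> complex" assume f: "hd j f" and g: "hd k g" and p: "\<phi> \<in> LF"
    have f': "hd (- j) (pshift f (- j))" by (rule hd_theta[OF f])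
    have g': "hd (- k) (pshift g (- k))" by (rule hd_theta[OF g])
    have e: "\<rho> (hm (- k) (pshift g (- k))) (\<rho> (hm (- j) (pshift f (- j))) x) =
       \<rho> (hm (- j) (pshift f (- j))) (\<rho> (hm (- k) (pshift g (- k))) x)
       + \<rho> (hm (- (j + k)) (pshift (bp j f k g) (- (j + k)))) x + sc (1/2 * psih j f k g) x" for x
      using comm_hm[OF g' f', of x] by (simp add: bp_theta psih_theta add.commute)
    show "rhod (hm j f) (rhod (hm k g) \<phi>) = rhod (hm k g) (rhod (hm j f) \<phi>) + rhod (hm (j + k) (bp j f k g)) \<phi>
      + scd (1/2 * psih j f k g) \<phi>"
      unfolding rhod_hm scd_def
      by (simp add: fun_eq_iff e LF_add[OF p] LF_sc[OF p])
  qed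
qed

lemma phi_Mn: assumes p: "\<phi> \<in> LF" and v: "\<phi> v0 = 0" and n: "\<And>k f x. k < 0 \<Longrightarrow> hd k f \<Longrightarrow> \<phi> (\<rho> (hm k f) x) = 0"
  shows "\<phi> = 0"
proof -
  have M: "\<phi> x = 0" if "x \<in> Mn v0" for x
    using that
  proof (induction rule: Mn.induct)
    case (Mn_W x) then show ?case using W0v0 v LF_0[OF p] by blast
  next
    case (Mn_n x k f) then show ?case using n by blast
  qed
  have "\<phi> y = 0" if "y \<in> hr.span (Mn v0)" for y
    using that
  proof (induction rule: hr.span_induct_alt)
    case base then show ?case using LF_0[OF p] .
  next
    case (step c x y) then show ?case using M LF_add[OF p] LF_sc[OF p] by simp
  qed
  then show ?thesis using span_Mn_v0 by (auto simp: fun_eq_iff)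
qed

lemma hwm_d: "hwm scd rhod LF pi"
proof (rule hwm.intro[OF hrep_d], rule hwm_axioms.intro)
  show "pi \<in> LF" by (rule pi_LF)
  show "\<And>k f. 0 \<le> k \<Longrightarrow> hd k f \<Longrightarrow> rhod (hm k f) pi = 0"
  proof -
    fix k f assume k: "0 \<le> (k::int)" and f: "hd k f"
    show "rhod (hm k f) pi = 0"
      unfolding rhod_hm using pi_neg[of "- k" "pshift f (- k)"] k hd_theta[OF f] by (simp add: fun_eq_iff)
  qed
  show "\<And>u N. u \<in> LF \<Longrightarrow> 0 < N \<Longrightarrow> rhod E0 u = scd (- of_nat N) u \<Longrightarrow>
       \<forall>p g. 0 < p \<longrightarrow> hd p g \<longrightarrow> rhod (hm p g) u = 0 \<Longrightarrow> u = 0"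
  proof -
    fix \<phi> :: "'v \<Rightarrow> complex" and N :: nat
    assume p: "\<phi> \<in> LF" and N: "0 < N" and e: "rhod E0 \<phi> = scd (- of_nat N) \<phi>"
      and kl: "\<forall>p g. 0 < p \<longrightarrow> hd p g \<longrightarrow> rhod (hm p g) \<phi> = 0"
    have e': "\<phi> (\<rho> E0 x) = - of_nat N * \<phi> x" for x
      using fun_cong[OF e, of x] by (simp add: rhod_def scd_def theta_E0)
    have "\<phi> v0 = 0" using e'[of v0] E0v0 LF_0[OF p] N by simp
    moreover have "\<phi> (\<rho> (hm k f) x) = 0" if k: "k < 0" and f: "hd k f" for k f x
    proof -
      have g: "hd (- k) (pshift f (- k))" by (rule hd_theta[OF f])
      have "rhod (hm (- k) (pshift f (- k))) \<phi> = 0" using kl g k by simp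
      then have "\<phi> (\<rho> (hm (- (- k)) (pshift (pshift f (- k)) (- (- k)))) x) = 0"
        unfolding rhod_hm by (simp add: fun_eq_iff)
      then show ?thesis by (simp add: pshift_pshift)
    qed
    ultimately show "\<phi> = 0" by (rule phi_Mn[OF p])
  qed
qed

sublocale dual: hwm scd rhod LF pi by (rule hwm_d)


lemma VU_sub: "module.subspace sc S \<Longrightarrow> v0 \<in> S \<Longrightarrow> (\<forall>k. \<forall>x\<in>S. \<rho> (Lm k) x \<in> S) \<Longrightarrow> x \<in> vh.VU \<Longrightarrow> x \<in> S"
proof -
  assume S: "module.subspace sc S" and v: "v0 \<in> S" and L: "\<forall>k. \<forall>x\<in>S. \<rho> (Lm k) x \<in> S" and x: "x \<in> vh.VU"
  show "x \<in> S" using x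
  proof (induction rule: vh.VU.induct)
    case VU_v then show ?case using v .
  next
    case (VU_L x k) then show ?case using L by blast
  next
    case (VU_add x y) then show ?case using S by (simp add: hr.subspace_add)
  next
    case (VU_sc x z) then show ?case using S by (simp add: hr.subspace_scale)
  qed
qed

lemma part1: "module.subspace sc S \<Longrightarrow> v0 \<in> S \<Longrightarrow> (\<forall>k. \<forall>x\<in>S. \<rho> (Lm k) x \<in> S) \<Longrightarrow> x \<in> S"
  using VU_sub VU_UNIV by blast

lemma vir_irr: assumes S: "module.subspace sc T" and L: "\<forall>k. \<forall>x\<in>T. \<rho> (Lm k) x \<in> T"
  shows "T = {0} \<or> T = UNIV"
proof (cases "v0 \<in> T")
  case True then show ?thesis using part1[OF S True L] by blast
next
  case False
  have E0T: "\<forall>x\<in>T. \<rho> E0 x \<in> T"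
  proof
    fix x assume x: "x \<in> T"
    have "\<rho> (Lm 0) x = - \<rho> E0 x" unfolding Lm_def by (rule hr.rminusp[OF hd_cen]) simp
    then have "\<rho> E0 x = - \<rho> (Lm 0) x" by simp
    then show "\<rho> E0 x \<in> T" using L x S by (simp add: hr.subspace_neg)
  qed
  have piT: "pi x = 0" if x: "x \<in> T" for x
  proof (rule ccontr)
    assume nz: "pi x \<noteq> 0"
    have "sc (pi x) v0 \<in> T" by (rule proj[OF S E0T x pi_spec])
    then have "sc (1 / pi x) (sc (pi x) v0) \<in> T" using S by (rule hr.subspace_scale[rotated])
    moreover have "sc (1 / pi x) (sc (pi x) v0) = v0" using nz by simp
    ultimately show False using False by simp
  qed
  have phiT: "\<phi> x = 0" if "\<phi> \<in> dual.VU" "x \<in> T" for \<phi> x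
    using that
  proof (induction arbitrary: x rule: dual.VU.induct)
    case VU_v then show ?case using piT by simp
  next
    case (VU_L \<phi> k)
    have "rhod (Lm k) \<phi> x = \<phi> (\<rho> (Lm (- k)) x)" by (simp add: rhod_def Lm_def theta_L)
    then show ?case using VU_L.IH L VU_L.prems by simp
  next
    case (VU_add \<phi> \<psi>) then show ?case by simp
  next
    case (VU_sc \<phi> z) then show ?case by (simp add: scd_def)
  qed
  define R where "R = {x. \<forall>\<phi>\<in>dual.VU. \<phi> x = 0}"
  have "R = {0} \<or> R = UNIV"
  proof (rule irr)
    show "module.subspace sc R"
      unfolding R_def
      by (rule hr.subspaceI) (auto simp: LF_add LF_sc LF_0 dual.VU_K)
    show "\<forall>a\<in>Dplus. \<forall>x\<in>R. \<rho> a x \<in> R"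
    proof (intro ballI)
      fix a x assume a: "a \<in> Dplus" and x: "x \<in> R"
      show "\<rho> a x \<in> R" unfolding R_def
      proof
        show "\<forall>\<phi>\<in>dual.VU. \<phi> (\<rho> a x) = 0"
        proof
          fix \<phi> assume p: "\<phi> \<in> dual.VU"
          have "rhod (theta a) \<phi> \<in> dual.VU" by (rule dual.VU_inv[OF Dplus_theta[OF a] p])
          then have "rhod (theta a) \<phi> x = 0" using x by (simp add: R_def)
          then show "\<phi> (\<rho> a x) = 0" by (simp add: rhod_def)
        qed
      qed
    qed
  qed
  moreover have "v0 \<notin> R"
  proof
    assume "v0 \<in> R"
    then have "pi v0 = 0" using dual.VU_v by (simp add: R_def)
    then show False using pi_v0 by simp
  qed
  ultimately have "R = {0}" by blast
  moreover have "T \<subseteq> R" using phiT by (auto simp: R_def)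
  ultimately have "T \<subseteq> {0}" by simp
  then have "T = {0}" using hr.subspace_0[OF S] by blast
  then show ?thesis by simp
qed

end

lemma sumsq: "(\<Sum>j\<in>{- int n..-1}. (of_int j + c) ^ 2) =
   of_nat n * c ^ 2 - c * of_nat n * (of_nat n + 1) + of_nat n * (of_nat n + 1) * (2 * of_nat n + 1) / (6::complex)"
proof (induction n)
  case 0 then show ?case by simp
next
  case (Suc n)
  have e: "{- int (Suc n)..-1} = insert (- int (Suc n)) {- int n..-1}" by auto
  show ?case unfolding e using Suc by (simp add: field_simps power2_eq_square)
qed

lemma psi_vir: "psi1 m (cen m) (cen (- m)) = (of_int m ^ 3 - of_int m) / 12"
proof (cases "0 \<le> m")
  case True
  define n where "n = nat m"
  have m: "m = int n" using True by (simp add: n_def)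
  have "psi1 m (cen m) (cen (- m)) = (\<Sum>j\<in>{- int n..-1}. (of_int j + (of_nat n + 1) / 2) ^ 2)"
    unfolding psi1_def m by (simp add: field_simps power2_eq_square)
  also have "\<dots> = (of_int m ^ 3 - of_int m) / 12" unfolding sumsq m by (simp add: field_simps power2_eq_square power3_eq_cube)
  finally show ?thesis .
next
  case False
  define n where "n = nat (- m)"
  have m: "m = - int n" using False by (simp add: n_def)
  have "psi1 m (cen m) (cen (- m)) = - (\<Sum>j\<in>{- int n..-1}. (of_int j + (of_nat n + 1) / 2) ^ 2)"
    unfolding psi1_def m using False m by (simp add: field_simps power2_eq_square)
  also have "\<dots> = (of_int m ^ 3 - of_int m) / 12" unfolding sumsq m by (simp add: field_simps power2_eq_square power3_eq_cube)
  finally show ?thesis .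
qed

lemma bp_neg1: "bp j (- f) k g = - bp j f k g"
  by (rule poly_eqI) (simp add: bp_def)

lemma psi1_negneg: "psi1 m (- f) (- g) = psi1 m f g"
  by (simp add: psi1_def)

context vside begin

lemma vir_comm: "\<rho> (Lm m) (\<rho> (Lm n) x) - \<rho> (Lm n) (\<rho> (Lm m) x) =
   sc (of_int (m - n)) (\<rho> (Lm (m + n)) x) + (if m = - n then sc (of_int (m^3 - m) / 12 * (1/2)) x else 0)"
proof -
  have e: "\<rho> (Lm m) (\<rho> (Lm n) x) = \<rho> (Lm n) (\<rho> (Lm m) x) + \<rho> (hm (m + n) (bp m (- cen m) n (- cen n))) x
     + sc (1/2 * psih m (- cen m) n (- cen n)) x"
    unfolding Lm_def by (rule comm_hm[OF hd_negcen hd_negcen])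
  have b: "bp m (- cen m) n (- cen n) = smult (of_int (m - n)) (- cen (m + n))"
    unfolding bp_neg1 bp_neg4 bp_11 by (rule poly_eqI) (simp add: field_simps)
  have t2: "\<rho> (hm (m + n) (bp m (- cen m) n (- cen n))) x = sc (of_int (m - n)) (\<rho> (Lm (m + n)) x)"
    unfolding b Lm_def by (rule hr.rsmult[OF hd_negcen]) simp
  have t3: "sc (1/2 * psih m (- cen m) n (- cen n)) x = (if m = - n then sc (of_int (m^3 - m) / 12 * (1/2)) x else 0)"
  proof (cases "m = - n")
    case True
    have n: "n = - m" using True by simp
    have "psih m (- cen m) n (- cen n) = psi1 m (cen m) (cen (- m))"
      unfolding n by (simp add: psih_def psi1_negneg)
    then have "psih m (- cen m) n (- cen n) = (of_int m ^ 3 - of_int m) / 12"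
      using psi_vir by simp
    then show ?thesis using True by (simp add: field_simps)
  next
    case False then show ?thesis by (simp add: psih_def)
  qed
  show ?thesis using e t2 t3 by (simp add: algebra_simps)
qed

lemma Lvir: "is_L_vir sc (\<lambda>k. \<rho> (Wmode 1 k)) (1/2) 0 v0"
  unfolding is_L_vir_def Wmode1 Lm_def[symmetric]
proof (intro conjI allI impI)
  show "vector_space sc" by (rule vs)
  show "Vector_Spaces.linear sc sc (\<rho> (Lm k))" for k by (rule linr) (simp add: Lm_def hd_negcen)
  show "\<rho> (Lm m) (\<rho> (Lm n) v) - \<rho> (Lm n) (\<rho> (Lm m) v) =
      sc (of_int (m - n)) (\<rho> (Lm (m + n)) v) + (if m = - n then sc (of_int (m ^ 3 - m) / 12 * (1 / 2)) v else 0)"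
    for m n v by (rule vir_comm)
  show "v0 \<noteq> 0" by (rule v0nz)
  show "\<rho> (Lm k) v0 = 0" if "0 < k" for k using hw0[of k "- cen k"] that hd_negcen by (simp add: Lm_def)
  show "\<rho> (Lm 0) v0 = sc 0 v0" using hw0[of 0 "- cen 0"] hd_negcen by (simp add: Lm_def)
  show "S = {0} \<or> S = UNIV" if "module.subspace sc S \<and> (\<forall>k. \<forall>v\<in>S. \<rho> (Lm k) v \<in> S)" for S
    using vir_irr that by blast
qed

lemma part1': "\<forall>n. odd n \<longrightarrow>
            (\<forall>S. module.subspace sc S \<and> v0 \<in> S \<and>
                 (\<forall>k. \<forall>v\<in>S. \<rho> (Wmode 1 k) v \<in> S)
               \<longrightarrow> \<rho> (Wmode n (- int n - 1)) v0 \<in> S)"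
  unfolding Wmode1 Lm_def[symmetric] using part1 by blast

end

theorem mainTheorem19:
  fixes sc :: "complex \<Rightarrow> 'v::ab_group_add \<Rightarrow> 'v"
    and \<rho> :: "dop \<Rightarrow> 'v \<Rightarrow> 'v" and v0 :: 'v
  assumes V: "is_Vplus sc (1/2) \<rho> v0"
  shows "(\<forall>n. odd n \<longrightarrow>
            (\<forall>S. module.subspace sc S \<and> v0 \<in> S \<and>
                 (\<forall>k. \<forall>v\<in>S. \<rho> (Wmode 1 k) v \<in> S)
               \<longrightarrow> \<rho> (Wmode n (- int n - 1)) v0 \<in> S))
       \<and> is_L_vir sc (\<lambda>k. \<rho> (Wmode 1 k)) (1/2) 0 v0"
proof -
  interpret vside sc \<rho> v0 by (rule vside.intro[OF V])
  show ?thesis using part1' Lvir by blast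
qed


end
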